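(* In non-adaptive group testing of $N$ items with a defective set $S_\omega$ of size $K$, using $T$ tests with a random design whose entries are i.i.d. with law $Q$ on $\{0,1\}$ and a memoryless test channel with per-test law $p(y\mid x_S)$, a lower bound on the total number of tests required to recover the defective set (with vanishing error probability, by any decoder) is $$T\ge\max_{i\in\{1,\dots,K\},\ (\mathcal S^1,\mathcal S^2)\in\Xi_{S_\omega}^{\{i\}}}\frac{\log\binom{N-K+i}{i}}{I(X_{\mathcal S^1};X_{\mathcal S^2},Y)},$$ where $\Xi_{S_\omega}^{\{i\}}$ is the set of pairs of disjoint sets $(\mathcal S^1,\mathcal S^2)$ with $\mathcal S^1\cup\mathcal S^2=S_\omega$, $|\mathcal S^1|=i$, $|\mathcal S^2|=K-i$.
   Context: The design is an $N\times T$ binary matrix (row $j$ = codeword of item $j$, entry $1$ iff item $j$ is in test $t$). Given defective set $S$, outcomes satisfy $p(Y^T\mid\mathbf X_S)=\prod_t p(Y(t)\mid X_S(t))$ where $\mathbf X_S$ is the submatrix of rows in $S$ and $X_S(t)$ its $t$-th column. The defective set is uniformly distributed over the $K$-subsets. In the mutual information, $X_{S_\omega}=(X_{\mathcal S^1},X_{\mathcal S^2})$ is a single per-test input with i.i.d. $Q$ entries and $Y$ the corresponding binary test outcome; $\log$ is base 2. *)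

theory Defs
  imports Complex_Main "HOL-Library.FuncSet"
begin

text \<open>Items are 0..<N, tests are 0..<T.  A design is a boolean N x T matrix
  (entry (j,t) true iff item j is in test t), an outcome vector is indexed by tests.\<close>

definition ksubsets :: "nat \<Rightarrow> nat \<Rightarrow> nat set set" where
  "ksubsets N K = {S. S \<subseteq> {0..<N} \<and> card S = K}"

definition bern :: "real \<Rightarrow> bool \<Rightarrow> real" where
  "bern q b = (if b then q else 1 - q)"

definition designs :: "nat \<Rightarrow> nat \<Rightarrow> (nat \<times> nat \<Rightarrow> bool) set" where
  "designs N T = PiE ({0..<N} \<times> {0..<T}) (\<lambda>_. UNIV)"

definition outcomes :: "nat \<Rightarrow> (nat \<Rightarrow> bool) set" where
  "outcomes T = PiE {0..<T} (\<lambda>_. UNIV)"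

definition design_prob :: "real \<Rightarrow> nat \<Rightarrow> nat \<Rightarrow> (nat \<times> nat \<Rightarrow> bool) \<Rightarrow> real" where
  "design_prob q N T X = (\<Prod>p\<in>{0..<N} \<times> {0..<T}. bern q (X p))"

text \<open>Per-test channel input X_S(t): the column entries of the K defective items,
  listed in increasing order of item index (positions 0..<K).\<close>
definition test_input :: "nat \<Rightarrow> nat set \<Rightarrow> (nat \<times> nat \<Rightarrow> bool) \<Rightarrow> nat \<Rightarrow> (nat \<Rightarrow> bool)" where
  "test_input K S X t = restrict (\<lambda>k. X (sorted_list_of_set S ! k, t)) {0..<K}"

definition chan_prob :: "nat \<Rightarrow> ((nat \<Rightarrow> bool) \<Rightarrow> bool \<Rightarrow> real) \<Rightarrow> nat set
    \<Rightarrow> (nat \<times> nat \<Rightarrow> bool) \<Rightarrow> nat \<Rightarrow> (nat \<Rightarrow> bool) \<Rightarrow> real" where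
  "chan_prob K W S X T Y = (\<Prod>t<T. W (test_input K S X t) (Y t))"

definition valid_channel :: "nat \<Rightarrow> ((nat \<Rightarrow> bool) \<Rightarrow> bool \<Rightarrow> real) \<Rightarrow> bool" where
  "valid_channel K W \<longleftrightarrow>
     (\<forall>u y. 0 \<le> W u y) \<and> (\<forall>u. W u True + W u False = 1) \<and>
     (\<forall>\<pi> u y. bij_betw \<pi> {0..<K} {0..<K} \<longrightarrow>
        W (restrict (u \<circ> \<pi>) {0..<K}) y = W (restrict u {0..<K}) y)"

definition error_prob :: "nat \<Rightarrow> nat \<Rightarrow> nat \<Rightarrow> real \<Rightarrow> ((nat \<Rightarrow> bool) \<Rightarrow> bool \<Rightarrow> real)
    \<Rightarrow> ((nat \<times> nat \<Rightarrow> bool) \<Rightarrow> (nat \<Rightarrow> bool) \<Rightarrow> nat set) \<Rightarrow> real" where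
  "error_prob N K T q W dec =
     (\<Sum>S\<in>ksubsets N K. \<Sum>X\<in>designs N T. \<Sum>Y\<in>outcomes T.
        design_prob q N T X * chan_prob K W S X T Y * (if dec X Y = S then 0 else 1))
     / real (card (ksubsets N K))"

text \<open>Mutual information (base 2) I(f(Z); g(Z)) for Z with finite pmf p on Zs.\<close>
definition mutual_info :: "'z set \<Rightarrow> ('z \<Rightarrow> real) \<Rightarrow> ('z \<Rightarrow> 'a) \<Rightarrow> ('z \<Rightarrow> 'b) \<Rightarrow> real" where
  "mutual_info Zs p f g =
     (\<Sum>z\<in>Zs. if p z = 0 then 0 else
        p z * log 2 ((\<Sum>z'\<in>{z'\<in>Zs. f z' = f z \<and> g z' = g z}. p z') /
          ((\<Sum>z'\<in>{z'\<in>Zs. f z' = f z}. p z') * (\<Sum>z'\<in>{z'\<in>Zs. g z' = g z}. p z'))))"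

text \<open>I(X_{S^1}; X_{S^2}, Y) for a single test: input U on positions 0..<K i.i.d. Q,
  Y ~ W(U,.), S^1 occupying the positions A and S^2 the remaining positions.\<close>
definition single_letter_mi :: "nat \<Rightarrow> real \<Rightarrow> ((nat \<Rightarrow> bool) \<Rightarrow> bool \<Rightarrow> real) \<Rightarrow> nat set \<Rightarrow> real" where
  "single_letter_mi K q W A =
     mutual_info (PiE {0..<K} (\<lambda>_. UNIV) \<times> (UNIV :: bool set))
       (\<lambda>(u, y). (\<Prod>k<K. bern q (u k)) * W u y)
       (\<lambda>(u, y). restrict u A)
       (\<lambda>(u, y). (restrict u ({0..<K} - A), y))"

definition positions :: "nat \<Rightarrow> nat set \<Rightarrow> nat set \<Rightarrow> nat set" where
  "positions K S S1 = {k \<in> {0..<K}. sorted_list_of_set S ! k \<in> S1}"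

definition Xi :: "nat set \<Rightarrow> nat \<Rightarrow> nat \<Rightarrow> (nat set \<times> nat set) set" where
  "Xi S K i = {(S1, S2). S1 \<inter> S2 = {} \<and> S1 \<union> S2 = S \<and> card S1 = i \<and> card S2 = K - i}"

end

theory Submission
  imports Defs
begin


lemma ln_ge_one_minus_inv: "0 < (x::real) \<Longrightarrow> 1 - 1/x \<le> ln x"
proof -
  assume x: "0 < x"
  have "ln (1/x) \<le> 1/x - 1" using x by (intro ln_le_minus_one) simp
  moreover have "ln (1/x) = - ln x" using x by (simp add: ln_div)
  ultimately show ?thesis by simp
qed

lemma logsum_point:
  fixes p r P R :: real
  assumes "0 \<le> p" "0 \<le> r" "0 < p \<longrightarrow> 0 < r" "0 < P" "0 < R"
  shows "p * ln (P / R) + p - r * P / R \<le> p * ln (p / r)"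
proof (cases "p = 0")
  case True then show ?thesis using assms by simp
next
  case False
  then have p: "0 < p" using assms by simp
  then have r: "0 < r" using assms by simp
  have x: "0 < p * R / (r * P)" using p r assms by simp
  have "1 - 1 / (p * R / (r * P)) \<le> ln (p * R / (r * P))" by (rule ln_ge_one_minus_inv[OF x])
  moreover have "ln (p * R / (r * P)) = ln (p / r) - ln (P / R)"
    using p r assms by (simp add: ln_div ln_mult)
  moreover have "1 / (p * R / (r * P)) = r * P / (p * R)" by simp
  ultimately have "1 - r * P / (p * R) \<le> ln (p / r) - ln (P / R)" by simp
  then have "p * (1 - r * P / (p * R)) \<le> p * (ln (p / r) - ln (P / R))"
    using p by (intro mult_left_mono) auto
  moreover have "p * (1 - r * P / (p * R)) = p - r * P / R" using p assms by (simp add: field_simps)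
  ultimately show ?thesis by (simp add: algebra_simps)
qed

lemma logsum_ln:
  fixes p r :: "'a \<Rightarrow> real"
  assumes fin: "finite Z" and pn: "\<forall>z\<in>Z. 0 \<le> p z" and rn: "\<forall>z\<in>Z. 0 \<le> r z"
    and ac: "\<forall>z\<in>Z. 0 < p z \<longrightarrow> 0 < r z"
  shows "(\<Sum>z\<in>Z. p z) * ln ((\<Sum>z\<in>Z. p z) / (\<Sum>z\<in>Z. r z)) \<le> (\<Sum>z\<in>Z. p z * ln (p z / r z))"
proof (cases "(\<Sum>z\<in>Z. p z) = 0")
  case True
  then have "\<forall>z\<in>Z. p z = 0" using sum_nonneg_eq_0_iff[OF fin] pn by blast
  then show ?thesis using True by simp
next
  case False
  define P where "P = (\<Sum>z\<in>Z. p z)"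
  define R where "R = (\<Sum>z\<in>Z. r z)"
  have P: "0 < P" using False pn unfolding P_def by (metis less_eq_real_def sum_nonneg)
  then obtain z where z: "z \<in> Z" "0 < p z" unfolding P_def
  proof -
    have "\<exists>z\<in>Z. p z \<noteq> 0" using False sum.neutral by (metis P_def)
    then show ?thesis using that pn by fastforce
  qed
  have "r z \<le> R" unfolding R_def using fin z rn by (intro member_le_sum) auto
  then have R: "0 < R" using z ac by fastforce
  have "(\<Sum>z\<in>Z. p z * ln (P / R) + p z - r z * P / R) \<le> (\<Sum>z\<in>Z. p z * ln (p z / r z))"
    using pn rn ac P R by (intro sum_mono logsum_point) auto
  moreover have "(\<Sum>z\<in>Z. p z * ln (P / R) + p z - r z * P / R) = P * ln (P / R) + P - R * P / R"
    unfolding P_def R_def by (simp add: sum.distrib sum_subtractf sum_distrib_right sum_divide_distrib)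
  moreover have "R * P / R = P" using R by simp
  ultimately show ?thesis unfolding P_def[symmetric] R_def[symmetric] by simp
qed

lemma xlnx_lower: "0 < (x::real) \<Longrightarrow> - 2 * sqrt x \<le> x * ln x"
proof -
  assume x: "0 < x"
  have sx: "0 < sqrt x" using x by simp
  have "1 - 1 / sqrt x \<le> ln (sqrt x)" using ln_ge_one_minus_inv[OF sx] .
  moreover have "ln (sqrt x) = ln x / 2" using x by (simp add: ln_sqrt)
  ultimately have "2 - 2 / sqrt x \<le> ln x" by simp
  then have "x * (2 - 2 / sqrt x) \<le> x * ln x" using x by (intro mult_left_mono) auto
  moreover have "x * (2 / sqrt x) = 2 * sqrt x" using x
    by (metis mult.commute real_div_sqrt times_divide_eq_right less_imp_le)
  ultimately show ?thesis using x by (simp add: right_diff_distrib)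
qed

lemma ln2_ge_half: "1/2 \<le> ln (2::real)"
  using ln_ge_one_minus_inv[of 2] by simp

lemma fano_numeric:
  fixes J a rE rF \<epsilon> :: real and C :: nat
  assumes eps: "\<epsilon> > 0" and a1: "1 - (min \<epsilon> 1 / 9)^2 \<le> a" and a2: "a \<le> 1" and C1: "C \<ge> 1"
    and J0: "0 \<le> J"
    and JF: "C \<ge> 2 \<Longrightarrow> a * log 2 (a / rE) + (1 - a) * log 2 ((1 - a) / rF) \<le> J"
    and rE: "0 < rE" "rE \<le> 1 / real C" and rF: "rF \<le> 1" "a < 1 \<longrightarrow> 0 < rF"
  shows "(1 - \<epsilon>) * log 2 (real C) \<le> J"
proof -
  consider "C = 1" | "\<epsilon> \<ge> 1" | "C \<ge> 2" "\<epsilon> < 1" using C1 by linarith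
  then show ?thesis
  proof cases
    case 1 then show ?thesis using J0 by simp
  next
    case 2
    have "0 \<le> log 2 (real C)" using C1 by simp
    then have "(1 - \<epsilon>) * log 2 (real C) \<le> 0" using 2 by (simp add: mult_nonpos_nonneg)
    then show ?thesis using J0 by linarith
  next
    case 3
    define s where "s = \<epsilon> / 9"
    have s: "0 < s" "s \<le> 1/9" using eps 3 unfolding s_def by auto
    have as: "1 - s^2 \<le> a" using a1 3 unfolding s_def by simp
    have s2: "s^2 \<le> s" using s by (simp add: power2_eq_square mult_le_cancel_left1)
    have apos: "1/2 \<le> a" using as s2 s by linarith
    define L where "L = log 2 (real C)"
    have L1: "1 \<le> L" unfolding L_def using 3 by simp
    have l2: "0 < ln (2::real)" by simp
    have "real C \<le> 1 / rE" using rE C1 by (simp add: field_simps)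
    then have "a * real C \<le> a * (1 / rE)" using apos by (intro mult_left_mono) auto
    then have "a * real C \<le> a / rE" by simp
    then have "log 2 (a * real C) \<le> log 2 (a / rE)" using apos C1 by (intro log_mono) auto
    moreover have "log 2 (a * real C) = log 2 a + L" unfolding L_def using apos C1 by (simp add: log_mult)
    ultimately have t1: "a * (log 2 a + L) \<le> a * log 2 (a / rE)" using apos by (intro mult_left_mono) auto
    have t2: "(1 - a) * log 2 (1 - a) \<le> (1 - a) * log 2 ((1 - a) / rF)"
    proof (cases "a = 1")
      case True then show ?thesis by simp
    next
      case False
      then have "a < 1" using a2 by simp
      have rf: "0 < rF" using rF \<open>a < 1\<close> by simp
      have "1 \<le> 1 / rF" using rF rf by simp
      then have "(1 - a) * 1 \<le> (1 - a) * (1 / rF)" using \<open>a < 1\<close> by (intro mult_left_mono) auto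
      then have "log 2 (1 - a) \<le> log 2 ((1 - a) / rF)" using \<open>a < 1\<close>
        by (intro log_mono) auto
      then show ?thesis using a2 by (intro mult_left_mono) auto
    qed
    have h1: "- 2 * s^2 \<le> a * ln a"
    proof -
      have "1 - 1/a \<le> ln a" using ln_ge_one_minus_inv apos by simp
      then have "a * (1 - 1/a) \<le> a * ln a" using apos by (intro mult_left_mono) auto
      moreover have "a * (1 - 1/a) = a - 1" using apos by (simp add: field_simps)
      ultimately show ?thesis using as s2 zero_le_power2[of s] by linarith
    qed
    have h2: "- 2 * s \<le> (1 - a) * ln (1 - a)"
    proof (cases "a = 1")
      case True then show ?thesis using s by simp
    next
      case False
      then have pa: "0 < 1 - a" using a2 by simp
      have "sqrt (1 - a) \<le> sqrt (s^2)" using as by (intro real_sqrt_le_mono) simp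
      then have "sqrt (1 - a) \<le> s" using s by simp
      then show ?thesis using xlnx_lower[OF pa] by linarith
    qed
    have "a * log 2 a + (1 - a) * log 2 (1 - a) = (a * ln a + (1 - a) * ln (1 - a)) / ln 2"
      by (simp add: log_def add_divide_distrib)
    moreover have "- 4 * (s^2 + s) \<le> (a * ln a + (1 - a) * ln (1 - a)) / ln 2"
    proof -
      have nn: "- 2 * (s^2 + s) \<le> a * ln a + (1 - a) * ln (1 - a)" using h1 h2 by simp
      have sn: "0 \<le> s^2 + s" using s by simp
      have "4 * (s^2 + s) * (1/2) \<le> 4 * (s^2 + s) * ln 2" using ln2_ge_half sn by (intro mult_left_mono) auto
      then have "- 4 * (s^2 + s) * ln 2 \<le> - 2 * (s^2 + s)" by (simp add: algebra_simps)
      then have "- 4 * (s^2 + s) * ln 2 \<le> a * ln a + (1 - a) * ln (1 - a)" using nn by linarith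
      then show ?thesis using l2 by (simp add: pos_le_divide_eq)
    qed
    ultimately have H: "- 4 * (s^2 + s) \<le> a * log 2 a + (1 - a) * log 2 (1 - a)" by simp
    have "a * L \<ge> (1 - s^2) * L" using as L1 by (intro mult_right_mono) auto
    have key: "(1 - 9 * s) * L \<le> (1 - s^2) * L - 4 * (s^2 + s)"
    proof -
      have "s * 8 \<le> s * ((9 - s) * L)" using s L1
      proof (intro mult_left_mono)
        have "(9 - s) * 1 \<le> (9 - s) * L" using L1 s by (intro mult_left_mono) auto
        then show "8 \<le> (9 - s) * L" using s by (simp only: mult_1_right)
      qed (use s in auto)
      then show ?thesis using s2 by (simp add: algebra_simps power2_eq_square)
    qed
    have "(1 - \<epsilon>) * L = (1 - 9 * s) * L" unfolding s_def by simp
    also have "\<dots> \<le> (1 - s^2) * L - 4 * (s^2 + s)" by (rule key)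
    also have "\<dots> \<le> a * L + (a * log 2 a + (1 - a) * log 2 (1 - a))" using H \<open>a * L \<ge> _\<close> by linarith
    also have "\<dots> = a * (log 2 a + L) + (1 - a) * log 2 (1 - a)" by (simp add: algebra_simps)
    also have "\<dots> \<le> J" using t1 t2 JF 3 by linarith
    finally show ?thesis unfolding L_def .
  qed
qed



lemma fiber_PiE_eq: "J \<subseteq> I \<Longrightarrow>
  {c \<in> PiE I (\<lambda>_. UNIV). \<forall>j\<in>J. c j = u j} = PiE I (\<lambda>i. if i \<in> J then {u i} else UNIV)"
  by (auto simp: PiE_def Pi_def extensional_def split: if_splits)

lemma fiber_prod:
  fixes g :: "'a \<Rightarrow> bool \<Rightarrow> real"
  assumes "finite I" "J \<subseteq> I" "\<And>i. i \<in> I - J \<Longrightarrow> g i True + g i False = 1"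
  shows "(\<Sum>c\<in>{c \<in> PiE I (\<lambda>_. UNIV). \<forall>j\<in>J. c j = u j}. \<Prod>i\<in>I. g i (c i)) = (\<Prod>j\<in>J. g j (u j))"
proof -
  have "(\<Sum>c\<in>{c \<in> PiE I (\<lambda>_. UNIV). \<forall>j\<in>J. c j = u j}. \<Prod>i\<in>I. g i (c i))
      = (\<Prod>i\<in>I. \<Sum>y\<in>(if i \<in> J then {u i} else UNIV). g i y)"
    unfolding fiber_PiE_eq[OF assms(2)] using assms by (subst prod_sum_PiE) (auto simp del: prod_sum_PiE)
  also have "\<dots> = (\<Prod>i\<in>I. if i \<in> J then g i (u i) else 1)"
    using assms(3) by (intro prod.cong) (auto simp: UNIV_bool add.commute)
  also have "\<dots> = (\<Prod>j\<in>J. g j (u j))"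
    using assms by (simp add: prod.If_cases Int_absorb1)
  finally show ?thesis .
qed

lemma sum_PiE_prod_one:
  fixes g :: "'a \<Rightarrow> bool \<Rightarrow> real"
  assumes "finite I" "\<And>i. i \<in> I \<Longrightarrow> g i True + g i False = 1"
  shows "(\<Sum>c\<in>PiE I (\<lambda>_. UNIV). \<Prod>i\<in>I. g i (c i)) = 1"
  using fiber_prod[OF assms(1) empty_subsetI, of g undefined] assms(2) by simp

definition QA :: "real \<Rightarrow> nat set \<Rightarrow> (nat \<Rightarrow> bool) \<Rightarrow> real" where
  "QA q A u = (\<Prod>k\<in>A. bern q (u k))"

definition vt :: "nat \<Rightarrow> real \<Rightarrow> ((nat \<Rightarrow> bool) \<Rightarrow> bool \<Rightarrow> real) \<Rightarrow> nat set \<Rightarrow> (nat \<Rightarrow> bool) \<Rightarrow> bool \<Rightarrow> real" where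
  "vt K q W A u b = (\<Sum>u1\<in>{u1 \<in> PiE {0..<K} (\<lambda>_. UNIV). \<forall>k\<in>{0..<K} - A. u1 k = u k}. QA q A u1 * W u1 b)"

lemma bern_sum: "bern q True + bern q False = 1" by (simp add: bern_def)
lemma bern_nonneg: "0 \<le> q \<Longrightarrow> q \<le> 1 \<Longrightarrow> 0 \<le> bern q b" by (simp add: bern_def)
lemma QA_nonneg: "0 \<le> q \<Longrightarrow> q \<le> 1 \<Longrightarrow> 0 \<le> QA q A u"
  unfolding QA_def by (intro prod_nonneg) (simp add: bern_nonneg)

lemma restrict_eq_iff': "restrict f A = restrict g A \<longleftrightarrow> (\<forall>k\<in>A. f k = g k)"
  by (auto simp: fun_eq_iff restrict_def)

lemma PiE_eq_agree:
  assumes "u \<in> PiE I (\<lambda>_. UNIV)" "u' \<in> PiE I (\<lambda>_. UNIV)" "\<forall>k\<in>I. u' k = u k"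
  shows "u' = u"
  using assms by (auto simp: PiE_def extensional_def fun_eq_iff)

lemma QA_split:
  assumes "A \<subseteq> {0..<K}"
  shows "QA q {0..<K} u = QA q A u * QA q ({0..<K} - A) u"
  unfolding QA_def using assms
  by (subst prod.subset_diff[of A "{0..<K}"]) (auto simp: mult.commute)

lemma QA_cong: "\<forall>k\<in>A. u k = u' k \<Longrightarrow> QA q A u = QA q A u'"
  unfolding QA_def by (intro prod.cong) auto


lemma sum_times: "(\<Sum>z\<in>A \<times> B. g z) = (\<Sum>x\<in>A. \<Sum>y\<in>B. g (x, y))"
  by (subst sum.cartesian_product) (simp add: case_prod_eta)


lemma mi_formula:
  fixes W :: "(nat \<Rightarrow> bool) \<Rightarrow> bool \<Rightarrow> real"
  assumes A: "A \<subseteq> {0..<K}" and q: "0 \<le> q" "q \<le> 1"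
    and Wn: "\<forall>u y. 0 \<le> W u y" and Ws: "\<forall>u. W u True + W u False = 1"
  shows "single_letter_mi K q W A =
     (\<Sum>u\<in>PiE {0..<K} (\<lambda>_. UNIV). \<Sum>b\<in>UNIV. QA q {0..<K} u * W u b * log 2 (W u b / vt K q W A u b))"
proof -
  define U where "U = PiE {0..<K} (\<lambda>_. UNIV :: bool set)"
  define Zs where "Zs = U \<times> (UNIV :: bool set)"
  define p where "p = (\<lambda>(u, y). (\<Prod>k<K. bern q (u k)) * W u y)"
  have finU: "finite U" unfolding U_def by (simp add: finite_PiE)
  have pQA: "p (u, b) = QA q {0..<K} u * W u b" for u b
    unfolding p_def QA_def by (simp add: lessThan_atLeast0)
  have trm: "(if p (u, b) = 0 then 0 else p (u, b) * log 2
        ((\<Sum>z'\<in>{z' \<in> Zs. (\<lambda>(u, y). restrict u A) z' = restrict u A \<and>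
                  (\<lambda>(u, y). (restrict u ({0..<K} - A), y)) z' = (restrict u ({0..<K} - A), b)}. p z') /
         ((\<Sum>z'\<in>{z' \<in> Zs. (\<lambda>(u, y). restrict u A) z' = restrict u A}. p z') *
          (\<Sum>z'\<in>{z' \<in> Zs. (\<lambda>(u, y). (restrict u ({0..<K} - A), y)) z' = (restrict u ({0..<K} - A), b)}. p z'))))
      = QA q {0..<K} u * W u b * log 2 (W u b / vt K q W A u b)" if u: "u \<in> U" for u b
  proof (cases "p (u, b) = 0")
    case True then show ?thesis by (simp add: pQA)
  next
    case False
    have s1: "{z' \<in> Zs. (\<lambda>(u, y). restrict u A) z' = restrict u A \<and>
                  (\<lambda>(u, y). (restrict u ({0..<K} - A), y)) z' = (restrict u ({0..<K} - A), b)} = {(u, b)}"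
    proof (rule set_eqI, rule iffI)
      fix z assume "z \<in> {z' \<in> Zs. (\<lambda>(u, y). restrict u A) z' = restrict u A \<and>
                  (\<lambda>(u, y). (restrict u ({0..<K} - A), y)) z' = (restrict u ({0..<K} - A), b)}"
      moreover obtain u' b' where z: "z = (u', b')" by fastforce
      ultimately have h: "u' \<in> U" "\<forall>k\<in>A. u' k = u k" "\<forall>k\<in>{0..<K} - A. u' k = u k" "b' = b"
        by (auto simp: restrict_eq_iff' Zs_def)
      then have "\<forall>k\<in>{0..<K}. u' k = u k" by blast
      then have "u' = u" using PiE_eq_agree[of u "{0..<K}" u'] h(1) u unfolding U_def by auto
      then show "z \<in> {(u, b)}" using z h by simp
    qed (use u in \<open>auto simp: Zs_def\<close>)
    have s2: "{z' \<in> Zs. (\<lambda>(u, y). restrict u A) z' = restrict u A} =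
        {u' \<in> U. \<forall>k\<in>A. u' k = u k} \<times> UNIV"
      unfolding Zs_def by (auto simp: restrict_eq_iff')
    have s3: "{z' \<in> Zs. (\<lambda>(u, y). (restrict u ({0..<K} - A), y)) z' = (restrict u ({0..<K} - A), b)} =
        {u' \<in> U. \<forall>k\<in>{0..<K} - A. u' k = u k} \<times> {b}"
      unfolding Zs_def by (auto simp: restrict_eq_iff')
    have pf: "(\<Sum>z'\<in>{u' \<in> U. \<forall>k\<in>A. u' k = u k} \<times> UNIV. p z') = QA q A u"
    proof -
      have "(\<Sum>z'\<in>{u' \<in> U. \<forall>k\<in>A. u' k = u k} \<times> UNIV. p z') =
            (\<Sum>u'\<in>{u' \<in> U. \<forall>k\<in>A. u' k = u k}. \<Sum>b'\<in>UNIV. p (u', b'))"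
        by (subst sum.cartesian_product) (simp add: finU)
      also have "\<dots> = (\<Sum>u'\<in>{u' \<in> U. \<forall>k\<in>A. u' k = u k}. \<Prod>k\<in>{0..<K}. bern q (u' k))"
      proof (intro sum.cong refl)
        fix u' show "(\<Sum>b'\<in>UNIV. p (u', b')) = (\<Prod>k\<in>{0..<K}. bern q (u' k))"
          using Ws[rule_format, of u'] by (simp add: pQA UNIV_bool QA_def flip: distrib_left)
      qed
      also have "\<dots> = QA q A u" unfolding U_def QA_def using A
        by (intro fiber_prod) (auto simp: bern_sum)
      finally show ?thesis .
    qed
    have pg: "(\<Sum>z'\<in>{u' \<in> U. \<forall>k\<in>{0..<K} - A. u' k = u k} \<times> {b}. p z') = QA q ({0..<K} - A) u * vt K q W A u b"
    proof -
      have "(\<Sum>z'\<in>{u' \<in> U. \<forall>k\<in>{0..<K} - A. u' k = u k} \<times> {b}. p z') =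
          (\<Sum>u'\<in>{u' \<in> U. \<forall>k\<in>{0..<K} - A. u' k = u k}. QA q ({0..<K} - A) u * (QA q A u' * W u' b))"
      proof -
        have "(\<Sum>z'\<in>{u' \<in> U. \<forall>k\<in>{0..<K} - A. u' k = u k} \<times> {b}. p z') =
            (\<Sum>u'\<in>{u' \<in> U. \<forall>k\<in>{0..<K} - A. u' k = u k}. \<Sum>b'\<in>{b}. p (u', b'))"
          by (rule sum_times)
        also have "\<dots> = (\<Sum>u'\<in>{u' \<in> U. \<forall>k\<in>{0..<K} - A. u' k = u k}. QA q ({0..<K} - A) u * (QA q A u' * W u' b))"
        proof (intro sum.cong refl)
          fix u' assume "u' \<in> {u' \<in> U. \<forall>k\<in>{0..<K} - A. u' k = u k}"
          then have "QA q ({0..<K} - A) u' = QA q ({0..<K} - A) u" by (intro QA_cong) auto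
          then show "(\<Sum>b'\<in>{b}. p (u', b')) = QA q ({0..<K} - A) u * (QA q A u' * W u' b)"
            by (simp add: pQA QA_split[OF A])
        qed
        finally show ?thesis .
      qed
      also have "\<dots> = QA q ({0..<K} - A) u * vt K q W A u b"
        unfolding vt_def U_def by (simp add: sum_distrib_left)
      finally show ?thesis .
    qed
    have Qpos: "QA q {0..<K} u \<noteq> 0" using False by (simp add: pQA)
    then have "QA q A u \<noteq> 0" "QA q ({0..<K} - A) u \<noteq> 0" by (auto simp: QA_split[OF A])
    then show ?thesis using False unfolding s1 s2 s3 pf pg
      by (simp add: pQA QA_split[OF A])
  qed
  show ?thesis
    unfolding single_letter_mi_def mutual_info_def p_def[symmetric] Zs_def[symmetric] U_def[symmetric]
    apply (subst sum.cartesian_product)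
    apply (unfold Zs_def)
    apply (intro sum.cong refl)
    subgoal premises prems for z
    proof -
      obtain u b where z: "z = (u, b)" by fastforce
      have uU: "u \<in> U" using prems by (simp add: z)
      show ?thesis unfolding z prod.case by (rule trm[OF uU, of b, unfolded Zs_def])
    qed
    done
qed



lemma sum_filter_reindex:
  fixes p :: "'z \<Rightarrow> real"
  assumes fin: "finite Zs" and h: "bij_betw h Zs Zs"
  shows "(\<Sum>z'\<in>{z' \<in> Zs. P z'}. p z') = (\<Sum>z''\<in>{z'' \<in> Zs. P (h z'')}. p (h z''))"
proof -
  have "(\<Sum>z'\<in>{z' \<in> Zs. P z'}. p z') = (\<Sum>z'\<in>Zs. if P z' then p z' else 0)"
    using fin by (simp add: sum.inter_filter)
  also have "\<dots> = (\<Sum>z''\<in>Zs. if P (h z'') then p (h z'') else 0)"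
    using sum.reindex_bij_betw[OF h, of "\<lambda>z'. if P z' then p z' else 0"] by simp
  also have "\<dots> = (\<Sum>z''\<in>{z'' \<in> Zs. P (h z'')}. p (h z''))"
    using fin by (simp add: sum.inter_filter)
  finally show ?thesis .
qed

lemma mi_bij:
  fixes p :: "'z \<Rightarrow> real"
  assumes fin: "finite Zs" and h: "bij_betw h Zs Zs" and ph: "\<forall>z\<in>Zs. p (h z) = p z"
    and hf: "\<forall>z1\<in>Zs. \<forall>z2\<in>Zs. (f (h z1) = f (h z2)) = (f' z1 = f' z2)"
    and hg: "\<forall>z1\<in>Zs. \<forall>z2\<in>Zs. (g (h z1) = g (h z2)) = (g' z1 = g' z2)"
  shows "mutual_info Zs p f g = mutual_info Zs p f' g'"
proof -
  define T where "T = (\<lambda>z. if p z = 0 then 0 else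
        p z * log 2 ((\<Sum>z'\<in>{z'\<in>Zs. f z' = f z \<and> g z' = g z}. p z') /
          ((\<Sum>z'\<in>{z'\<in>Zs. f z' = f z}. p z') * (\<Sum>z'\<in>{z'\<in>Zs. g z' = g z}. p z'))))"
  define T' where "T' = (\<lambda>z. if p z = 0 then 0 else
        p z * log 2 ((\<Sum>z'\<in>{z'\<in>Zs. f' z' = f' z \<and> g' z' = g' z}. p z') /
          ((\<Sum>z'\<in>{z'\<in>Zs. f' z' = f' z}. p z') * (\<Sum>z'\<in>{z'\<in>Zs. g' z' = g' z}. p z'))))"
  have "mutual_info Zs p f g = (\<Sum>z\<in>Zs. T z)" unfolding mutual_info_def T_def ..
  also have "\<dots> = (\<Sum>z\<in>Zs. T (h z))" using sum.reindex_bij_betw[OF h, of "T"] by simp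
  also have "\<dots> = (\<Sum>z\<in>Zs. T' z)"
  proof (intro sum.cong refl)
    fix z assume z: "z \<in> Zs"
    have hz: "h z \<in> Zs" using h z by (auto simp: bij_betw_def)
    have e1: "(\<Sum>z'\<in>{z'\<in>Zs. f z' = f (h z) \<and> g z' = g (h z)}. p z') = (\<Sum>z'\<in>{z'\<in>Zs. f' z' = f' z \<and> g' z' = g' z}. p z')"
    proof -
      have "(\<Sum>z'\<in>{z'\<in>Zs. f z' = f (h z) \<and> g z' = g (h z)}. p z') =
            (\<Sum>z''\<in>{z''\<in>Zs. f (h z'') = f (h z) \<and> g (h z'') = g (h z)}. p (h z''))"
        by (rule sum_filter_reindex[OF fin h])
      also have "\<dots> = (\<Sum>z'\<in>{z'\<in>Zs. f' z' = f' z \<and> g' z' = g' z}. p z')"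
        using hf hg ph z by (intro sum.cong) auto
      finally show ?thesis .
    qed
    have e2: "(\<Sum>z'\<in>{z'\<in>Zs. f z' = f (h z)}. p z') = (\<Sum>z'\<in>{z'\<in>Zs. f' z' = f' z}. p z')"
    proof -
      have "(\<Sum>z'\<in>{z'\<in>Zs. f z' = f (h z)}. p z') = (\<Sum>z''\<in>{z''\<in>Zs. f (h z'') = f (h z)}. p (h z''))"
        by (rule sum_filter_reindex[OF fin h])
      also have "\<dots> = (\<Sum>z'\<in>{z'\<in>Zs. f' z' = f' z}. p z')"
        using hf ph z by (intro sum.cong) auto
      finally show ?thesis .
    qed
    have e3: "(\<Sum>z'\<in>{z'\<in>Zs. g z' = g (h z)}. p z') = (\<Sum>z'\<in>{z'\<in>Zs. g' z' = g' z}. p z')"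
    proof -
      have "(\<Sum>z'\<in>{z'\<in>Zs. g z' = g (h z)}. p z') = (\<Sum>z''\<in>{z''\<in>Zs. g (h z'') = g (h z)}. p (h z''))"
        by (rule sum_filter_reindex[OF fin h])
      also have "\<dots> = (\<Sum>z'\<in>{z'\<in>Zs. g' z' = g' z}. p z')"
        using hg ph z by (intro sum.cong) auto
      finally show ?thesis .
    qed
    show "T (h z) = T' z" unfolding T_def T'_def e1 e2 e3 using ph z by simp
  qed
  also have "\<dots> = mutual_info Zs p f' g'" unfolding mutual_info_def T'_def ..
  finally show ?thesis .
qed

lemma exists_perm:
  assumes A: "A \<subseteq> {0..<(K::nat)}" and B: "B \<subseteq> {0..<K}" and c: "card A = card B"
  shows "\<exists>\<pi>. bij_betw \<pi> {0..<K} {0..<K} \<and> \<pi> ` A = B"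
proof -
  have fA: "finite A" "finite B" using A B finite_subset[of _ "{0..<K}"] by auto
  obtain f1 where f1: "bij_betw f1 A B" using finite_same_card_bij[OF fA c] by blast
  have "card ({0..<K} - A) = card ({0..<K} - B)" using A B c fA by (simp add: card_Diff_subset)
  then obtain f2 where f2: "bij_betw f2 ({0..<K} - A) ({0..<K} - B)"
    using finite_same_card_bij by blast
  define \<pi> where "\<pi> = (\<lambda>k. if k \<in> A then f1 k else f2 k)"
  have b1: "bij_betw \<pi> A B" using f1 unfolding \<pi>_def by (rule bij_betw_cong[THEN iffD1, rotated]) auto
  have b2: "bij_betw \<pi> ({0..<K} - A) ({0..<K} - B)" using f2 unfolding \<pi>_def
    by (rule bij_betw_cong[THEN iffD1, rotated]) auto
  have "bij_betw \<pi> (A \<union> ({0..<K} - A)) (B \<union> ({0..<K} - B))"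
    by (rule bij_betw_combine[OF b1 b2]) auto
  moreover have "A \<union> ({0..<K} - A) = {0..<K}" "B \<union> ({0..<K} - B) = {0..<K}" using A B by auto
  ultimately show ?thesis using b1 by (auto simp: bij_betw_def)
qed

lemma mi_sym:
  assumes vc: "valid_channel K W" and A: "A \<subseteq> {0..<K}" and B: "B \<subseteq> {0..<K}" and c: "card A = card B"
  shows "single_letter_mi K q W A = single_letter_mi K q W B"
proof -
  obtain \<pi> where pi: "bij_betw \<pi> {0..<K} {0..<K}" "\<pi> ` A = B" using exists_perm[OF A B c] by blast
  define U where "U = PiE {0..<K} (\<lambda>_. UNIV :: bool set)"
  define Zs where "Zs = U \<times> (UNIV :: bool set)"
  define h where "h = (\<lambda>(u :: nat \<Rightarrow> bool, y :: bool). (restrict (u \<circ> \<pi>) {0..<K}, y))"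
  define \<sigma> where "\<sigma> = the_inv_into {0..<K} \<pi>"
  have sig: "bij_betw \<sigma> {0..<K} {0..<K}" unfolding \<sigma>_def by (rule bij_betw_the_inv_into[OF pi(1)])
  have pis: "\<pi> (\<sigma> k) = k" if "k \<in> {0..<K}" for k
    unfolding \<sigma>_def using pi(1) that by (simp add: f_the_inv_into_f_bij_betw)
  have spi: "\<sigma> (\<pi> k) = k" if "k \<in> {0..<K}" for k
    unfolding \<sigma>_def using pi(1) that by (simp add: bij_betw_def the_inv_into_f_f)
  have pimem: "\<pi> k \<in> {0..<K}" if "k \<in> {0..<K}" for k using pi(1) that by (auto simp: bij_betw_def)
  have sigmem: "\<sigma> k \<in> {0..<K}" if "k \<in> {0..<K}" for k using sig that by (auto simp: bij_betw_def)
  have finZ: "finite Zs" unfolding Zs_def U_def by (simp add: finite_PiE)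
  have hb: "bij_betw h Zs Zs"
  proof (rule bij_betw_byWitness[where f' = "\<lambda>(u, y). (restrict (u \<circ> \<sigma>) {0..<K}, y)"])
    show "\<forall>a\<in>Zs. (\<lambda>(u, y). (restrict (u \<circ> \<sigma>) {0..<K}, y)) (h a) = a"
      unfolding Zs_def U_def h_def using spi pimem pis sigmem
      by (auto simp: fun_eq_iff PiE_def extensional_def restrict_def)
    show "\<forall>a'\<in>Zs. h ((\<lambda>(u, y). (restrict (u \<circ> \<sigma>) {0..<K}, y)) a') = a'"
      unfolding Zs_def U_def h_def using spi pimem pis sigmem
      by (auto simp: fun_eq_iff PiE_def extensional_def restrict_def)
    show "h ` Zs \<subseteq> Zs" unfolding Zs_def U_def h_def by auto
    show "(\<lambda>(u, y). (restrict (u \<circ> \<sigma>) {0..<K}, y)) ` Zs \<subseteq> Zs" unfolding Zs_def U_def by auto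
  qed
  have ph: "\<forall>z\<in>Zs. (\<lambda>(u, y). (\<Prod>k<K. bern q (u k)) * W u y) (h z) = (\<lambda>(u, y). (\<Prod>k<K. bern q (u k)) * W u y) z"
  proof
    fix z assume z: "z \<in> Zs"
    obtain u y where zz: "z = (u, y)" by fastforce
    have uU: "u \<in> U" using z zz Zs_def by simp
    have "(\<Prod>k<K. bern q (restrict (u \<circ> \<pi>) {0..<K} k)) = (\<Prod>k\<in>{0..<K}. bern q (u (\<pi> k)))"
      by (simp add: lessThan_atLeast0)
    also have "\<dots> = (\<Prod>k\<in>{0..<K}. bern q (u k))"
      using prod.reindex_bij_betw[OF pi(1), of "\<lambda>k. bern q (u k)"] by simp
    finally have e1: "(\<Prod>k<K. bern q (restrict (u \<circ> \<pi>) {0..<K} k)) = (\<Prod>k<K. bern q (u k))"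
      by (simp add: lessThan_atLeast0)
    have "W (restrict (u \<circ> \<pi>) {0..<K}) y = W (restrict u {0..<K}) y"
      using vc pi(1) unfolding valid_channel_def by blast
    also have "restrict u {0..<K} = u" using uU unfolding U_def by (simp add: PiE_restrict)
    finally have Weq: "W (restrict (u \<circ> \<pi>) {0..<K}) y = W u y" .
    show "(\<lambda>(u, y). (\<Prod>k<K. bern q (u k)) * W u y) (h z) = (\<lambda>(u, y). (\<Prod>k<K. bern q (u k)) * W u y) z"
      unfolding zz h_def by (simp only: prod.case e1 Weq)
  qed
  have imA: "\<pi> ` ({0..<K} - A) = {0..<K} - B"
  proof -
    have "\<pi> ` ({0..<K} - A) = \<pi> ` {0..<K} - \<pi> ` A"
      using A pi(1) by (intro inj_on_image_set_diff[of _ "{0..<K}"]) (auto simp: bij_betw_def)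
    then show ?thesis using pi by (simp add: bij_betw_imp_surj_on)
  qed
  have hf: "\<forall>z1\<in>Zs. \<forall>z2\<in>Zs. ((\<lambda>(u, y). restrict u A) (h z1) = (\<lambda>(u, y). restrict u A) (h z2)) =
            ((\<lambda>(u, y). restrict u B) z1 = (\<lambda>(u, y). restrict u B) z2)"
  proof (intro ballI)
    fix z1 z2 assume "z1 \<in> Zs" "z2 \<in> Zs"
    obtain u1 y1 u2 y2 where zz: "z1 = (u1, y1)" "z2 = (u2, y2)" by fastforce
    have "(\<forall>k\<in>A. u1 (\<pi> k) = u2 (\<pi> k)) = (\<forall>j\<in>B. u1 j = u2 j)" using pi(2) by auto
    then show "((\<lambda>(u, y). restrict u A) (h z1) = (\<lambda>(u, y). restrict u A) (h z2)) =
            ((\<lambda>(u, y). restrict u B) z1 = (\<lambda>(u, y). restrict u B) z2)"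
      unfolding zz h_def using A by (auto simp: restrict_eq_iff')
  qed
  have hg: "\<forall>z1\<in>Zs. \<forall>z2\<in>Zs. ((\<lambda>(u, y). (restrict u ({0..<K} - A), y)) (h z1) = (\<lambda>(u, y). (restrict u ({0..<K} - A), y)) (h z2)) =
            ((\<lambda>(u, y). (restrict u ({0..<K} - B), y)) z1 = (\<lambda>(u, y). (restrict u ({0..<K} - B), y)) z2)"
  proof (intro ballI)
    fix z1 z2 assume "z1 \<in> Zs" "z2 \<in> Zs"
    obtain u1 y1 u2 y2 where zz: "z1 = (u1, y1)" "z2 = (u2, y2)" by fastforce
    have "(\<forall>k\<in>{0..<K} - A. u1 (\<pi> k) = u2 (\<pi> k)) = (\<forall>j\<in>{0..<K} - B. u1 j = u2 j)"
      unfolding imA[symmetric] by blast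
    then show "((\<lambda>(u, y). (restrict u ({0..<K} - A), y)) (h z1) = (\<lambda>(u, y). (restrict u ({0..<K} - A), y)) (h z2)) =
            ((\<lambda>(u, y). (restrict u ({0..<K} - B), y)) z1 = (\<lambda>(u, y). (restrict u ({0..<K} - B), y)) z2)"
      unfolding zz h_def by (auto simp: restrict_eq_iff')
  qed
  show ?thesis unfolding single_letter_mi_def U_def[symmetric] Zs_def[symmetric]
    by (rule mi_bij[OF finZ hb ph hf hg])
qed



lemma nth_sorted_bij:
  assumes "finite S" "card S = K"
  shows "bij_betw (\<lambda>k. sorted_list_of_set S ! k) {0..<K} S"
  using bij_betw_nth[of "sorted_list_of_set S" "{0..<K}" S] assms
  by (simp add: lessThan_atLeast0)

lemma bij_betw_preimage:
  assumes "bij_betw f X Y" "Z \<subseteq> Y"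
  shows "bij_betw f {x \<in> X. f x \<in> Z} Z"
proof (rule bij_betw_subset[OF assms(1)])
  show "f ` {x \<in> X. f x \<in> Z} = Z" using assms by (auto simp: bij_betw_def image_iff)
qed auto

lemma perm_restrict_bij:
  assumes pi: "bij_betw \<pi> {0..<K} {0..<(K::nat)}"
  shows "bij_betw (\<lambda>u. restrict (u \<circ> \<pi>) {0..<K}) (PiE {0..<K} (\<lambda>_. UNIV :: 'b set)) (PiE {0..<K} (\<lambda>_. UNIV))"
proof -
  define \<sigma> where "\<sigma> = the_inv_into {0..<K} \<pi>"
  have pis: "\<pi> (\<sigma> k) = k" if "k \<in> {0..<K}" for k
    unfolding \<sigma>_def using pi that by (simp add: f_the_inv_into_f_bij_betw)
  have spi: "\<sigma> (\<pi> k) = k" if "k \<in> {0..<K}" for k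
    unfolding \<sigma>_def using pi that by (simp add: bij_betw_def the_inv_into_f_f)
  have pimem: "\<pi> k \<in> {0..<K}" if "k \<in> {0..<K}" for k using pi that by (auto simp: bij_betw_def)
  have sig: "bij_betw \<sigma> {0..<K} {0..<K}" unfolding \<sigma>_def by (rule bij_betw_the_inv_into[OF pi])
  have sigmem: "\<sigma> k \<in> {0..<K}" if "k \<in> {0..<K}" for k using sig that by (auto simp: bij_betw_def)
  show ?thesis
  proof (rule bij_betw_byWitness[where f' = "\<lambda>u. restrict (u \<circ> \<sigma>) {0..<K}"])
    show "\<forall>a\<in>PiE {0..<K} (\<lambda>_. UNIV). restrict (restrict (a \<circ> \<pi>) {0..<K} \<circ> \<sigma>) {0..<K} = a"
      using spi pimem pis sigmem by (auto simp: fun_eq_iff PiE_def extensional_def restrict_def)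
    show "\<forall>a\<in>PiE {0..<K} (\<lambda>_. UNIV). restrict (restrict (a \<circ> \<sigma>) {0..<K} \<circ> \<pi>) {0..<K} = a"
      using spi pimem pis sigmem by (auto simp: fun_eq_iff PiE_def extensional_def restrict_def)
  qed auto
qed

lemma card_preimage_bij:
  assumes "bij_betw f X Y" "Z \<subseteq> Y"
  shows "card {x \<in> X. f x \<in> Z} = card Z"
  using bij_betw_same_card[OF bij_betw_preimage[OF assms]] .

lemma vt_eq:
  fixes c :: "nat \<Rightarrow> bool"
  assumes vc: "valid_channel K W"
    and S: "finite S" "card S = K" and S': "finite S'" "card S' = K"
    and s2: "s2 \<subseteq> S" "s2 \<subseteq> S'"
  defines "A \<equiv> {k \<in> {0..<K}. sorted_list_of_set S ! k \<in> S - s2}"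
    and "A' \<equiv> {k \<in> {0..<K}. sorted_list_of_set S' ! k \<in> S' - s2}"
  shows "vt K q W A (restrict (\<lambda>k. c (sorted_list_of_set S ! k)) {0..<K}) b =
         vt K q W A' (restrict (\<lambda>k. c (sorted_list_of_set S' ! k)) {0..<K}) b"
proof -
  define nS where "nS = (\<lambda>k. sorted_list_of_set S ! k)"
  define nS' where "nS' = (\<lambda>k. sorted_list_of_set S' ! k)"
  have bS: "bij_betw nS {0..<K} S" unfolding nS_def by (rule nth_sorted_bij[OF S])
  have bS': "bij_betw nS' {0..<K} S'" unfolding nS'_def by (rule nth_sorted_bij[OF S'])
  have cA: "{0..<K} - A = {k \<in> {0..<K}. nS k \<in> s2}"
    unfolding A_def nS_def using bS s2 unfolding nS_def by (auto simp: bij_betw_def)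
  have cA': "{0..<K} - A' = {k \<in> {0..<K}. nS' k \<in> s2}"
    unfolding A'_def nS'_def using bS' s2 unfolding nS'_def by (auto simp: bij_betw_def)
  have b1: "bij_betw nS ({0..<K} - A) s2" unfolding cA by (rule bij_betw_preimage[OF bS s2(1)])
  have b1': "bij_betw nS' ({0..<K} - A') s2" unfolding cA' by (rule bij_betw_preimage[OF bS' s2(2)])
  define idx' where "idx' = the_inv_into ({0..<K} - A') nS'"
  have b2: "bij_betw idx' s2 ({0..<K} - A')" unfolding idx'_def by (rule bij_betw_the_inv_into[OF b1'])
  have nidx: "nS' (idx' x) = x" if "x \<in> s2" for x
    unfolding idx'_def using b1' that by (simp add: f_the_inv_into_f_bij_betw)
  have cardA: "card A = card A'"
  proof -
    have "card A = card (S - s2)" unfolding A_def nS_def[symmetric]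
      by (rule card_preimage_bij[OF bS]) auto
    moreover have "card A' = card (S' - s2)" unfolding A'_def nS'_def[symmetric]
      by (rule card_preimage_bij[OF bS']) auto
    moreover have "finite s2" using s2 S finite_subset by auto
    ultimately show ?thesis using S S' s2 by (simp add: card_Diff_subset)
  qed
  have finA: "finite A" "finite A'" unfolding A_def A'_def by auto
  obtain f1 where f1: "bij_betw f1 A A'" using finite_same_card_bij[OF finA cardA] by blast
  define \<pi> where "\<pi> = (\<lambda>k. if k \<in> A then f1 k else idx' (nS k))"
  have pA: "bij_betw \<pi> A A'" using f1 unfolding \<pi>_def by (rule bij_betw_cong[THEN iffD1, rotated]) auto
  have pcA: "bij_betw \<pi> ({0..<K} - A) ({0..<K} - A')"
    using bij_betw_trans[OF b1 b2] unfolding \<pi>_def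
    by (rule bij_betw_cong[THEN iffD1, rotated]) auto
  have AK: "A \<subseteq> {0..<K}" "A' \<subseteq> {0..<K}" unfolding A_def A'_def by auto
  have pi: "bij_betw \<pi> {0..<K} {0..<K}"
  proof -
    have "bij_betw \<pi> (A \<union> ({0..<K} - A)) (A' \<union> ({0..<K} - A'))"
      by (rule bij_betw_combine[OF pA pcA]) auto
    moreover have "A \<union> ({0..<K} - A) = {0..<K}" "A' \<union> ({0..<K} - A') = {0..<K}" using AK by auto
    ultimately show ?thesis by simp
  qed
  have pimap: "nS' (\<pi> k) = nS k" if "k \<in> {0..<K} - A" for k
  proof -
    have "nS k \<in> s2" using that b1 by (auto simp: bij_betw_def)
    then show ?thesis using that nidx unfolding \<pi>_def by simp
  qed
  define U where "U = PiE {0..<K} (\<lambda>_. UNIV :: bool set)"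
  define H where "H = (\<lambda>u :: nat \<Rightarrow> bool. restrict (u \<circ> \<pi>) {0..<K})"
  have HU: "bij_betw H U U" unfolding H_def U_def by (rule perm_restrict_bij[OF pi])
  have finU: "finite U" unfolding U_def by (simp add: finite_PiE)
  have "vt K q W A (restrict (\<lambda>k. c (sorted_list_of_set S ! k)) {0..<K}) b =
      (\<Sum>u\<in>{u \<in> U. \<forall>k\<in>{0..<K} - A. u k = c (nS k)}. QA q A u * W u b)"
    unfolding vt_def U_def nS_def by (intro sum.cong refl) auto
  also have "\<dots> = (\<Sum>u\<in>{u \<in> U. \<forall>k\<in>{0..<K} - A. H u k = c (nS k)}. QA q A (H u) * W (H u) b)"
    by (rule sum_filter_reindex[OF finU HU])
  also have "\<dots> = (\<Sum>u\<in>{u \<in> U. \<forall>j\<in>{0..<K} - A'. u j = c (nS' j)}. QA q A' u * W u b)"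
  proof (rule sum.cong)
    have eqv: "(\<forall>k\<in>{0..<K} - A. H u k = c (nS k)) = (\<forall>j\<in>{0..<K} - A'. u j = c (nS' j))" for u
    proof
      assume h: "\<forall>k\<in>{0..<K} - A. H u k = c (nS k)"
      show "\<forall>j\<in>{0..<K} - A'. u j = c (nS' j)"
      proof
        fix j assume j: "j \<in> {0..<K} - A'"
        have "j \<in> \<pi> ` ({0..<K} - A)" using pcA j by (simp add: bij_betw_def)
        then obtain k where k: "k \<in> {0..<K} - A" "\<pi> k = j" by blast
        have "H u k = u j" using k unfolding H_def by auto
        then show "u j = c (nS' j)" using h k pimap by force
      qed
    next
      assume h: "\<forall>j\<in>{0..<K} - A'. u j = c (nS' j)"
      show "\<forall>k\<in>{0..<K} - A. H u k = c (nS k)"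
      proof
        fix k assume k: "k \<in> {0..<K} - A"
        have "\<pi> k \<in> {0..<K} - A'" using pcA k by (auto simp: bij_betw_def)
        then have "u (\<pi> k) = c (nS k)" using h pimap[OF k] by force
        then show "H u k = c (nS k)" using k unfolding H_def by auto
      qed
    qed
    then show "{u \<in> U. \<forall>k\<in>{0..<K} - A. H u k = c (nS k)} = {u \<in> U. \<forall>j\<in>{0..<K} - A'. u j = c (nS' j)}"
      by blast
  next
    fix u assume "u \<in> {u \<in> U. \<forall>j\<in>{0..<K} - A'. u j = c (nS' j)}"
    then have uU: "u \<in> U" by simp
    have "QA q A (H u) = (\<Prod>k\<in>A. bern q (u (\<pi> k)))" unfolding QA_def H_def using AK
      by (intro prod.cong) auto
    also have "\<dots> = QA q A' u" unfolding QA_def using prod.reindex_bij_betw[OF pA, of "\<lambda>k. bern q (u k)"]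
      by simp
    finally have e1: "QA q A (H u) = QA q A' u" .
    have "W (H u) b = W (restrict u {0..<K}) b"
      unfolding H_def using vc pi unfolding valid_channel_def by blast
    also have "restrict u {0..<K} = u" using uU unfolding U_def by (simp add: PiE_restrict)
    finally show "QA q A (H u) * W (H u) b = QA q A' u * W u b" using e1 by simp
  qed
  also have "\<dots> = vt K q W A' (restrict (\<lambda>k. c (sorted_list_of_set S' ! k)) {0..<K}) b"
    unfolding vt_def U_def nS'_def by (intro sum.cong refl) auto
  finally show ?thesis .
qed



lemma outcomes_prod_one:
  fixes f :: "nat \<Rightarrow> bool \<Rightarrow> real"
  assumes "\<And>t. t < T \<Longrightarrow> f t True + f t False = 1"
  shows "(\<Sum>Y\<in>outcomes T. \<Prod>t<T. f t (Y t)) = 1"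
  unfolding outcomes_def lessThan_atLeast0 using assms by (intro sum_PiE_prod_one) auto

lemma outcomes_sum_one_coord:
  fixes f :: "nat \<Rightarrow> bool \<Rightarrow> real"
  assumes "\<And>t. t < T \<Longrightarrow> f t True + f t False = 1" and s: "s < T"
  shows "(\<Sum>Y\<in>outcomes T. (\<Prod>t<T. f t (Y t)) * l (Y s)) = (\<Sum>b\<in>UNIV. f s b * l b)"
proof -
  define g where "g = (\<lambda>t b. f t b * (if t = s then l b else 1))"
  have "(\<Sum>Y\<in>outcomes T. (\<Prod>t<T. f t (Y t)) * l (Y s)) = (\<Sum>Y\<in>outcomes T. \<Prod>t\<in>{0..<T}. g t (Y t))"
  proof (intro sum.cong refl)
    fix Y
    have "(\<Prod>t\<in>{0..<T}. g t (Y t)) = (\<Prod>t\<in>{0..<T}. f t (Y t)) * (\<Prod>t\<in>{0..<T}. if t = s then l (Y t) else 1)"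
      unfolding g_def by (simp add: prod.distrib)
    also have "(\<Prod>t\<in>{0..<T}. if t = s then l (Y t) else 1) = l (Y s)" using s by (simp add: prod.delta)
    finally show "(\<Prod>t<T. f t (Y t)) * l (Y s) = (\<Prod>t\<in>{0..<T}. g t (Y t))"
      by (simp add: lessThan_atLeast0)
  qed
  also have "\<dots> = (\<Prod>t\<in>{0..<T}. \<Sum>b\<in>UNIV. g t b)"
    unfolding outcomes_def by (rule prod_sum_PiE[symmetric]) auto
  also have "\<dots> = (\<Sum>b\<in>UNIV. g s b) * (\<Prod>t\<in>{0..<T} - {s}. \<Sum>b\<in>UNIV. g t b)"
    using s by (subst prod.remove[of _ s]) auto
  also have "(\<Prod>t\<in>{0..<T} - {s}. \<Sum>b\<in>UNIV. g t b) = 1"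
    using assms(1) unfolding g_def by (intro prod.neutral) (auto simp: UNIV_bool add.commute)
  finally show ?thesis unfolding g_def by simp
qed

lemma design_prob_sum_one:
  assumes "0 \<le> q" "q \<le> 1"
  shows "(\<Sum>X\<in>designs N T. design_prob q N T X) = 1"
  unfolding designs_def design_prob_def by (intro sum_PiE_prod_one) (auto simp: bern_sum)

lemma design_marginal:
  fixes G :: "(nat \<Rightarrow> bool) \<Rightarrow> real"
  assumes S: "S \<subseteq> {0..<N}" "card S = K" and s: "s < T"
  shows "(\<Sum>X\<in>designs N T. design_prob q N T X * G (test_input K S X s)) =
         (\<Sum>u\<in>PiE {0..<K} (\<lambda>_. UNIV). QA q {0..<K} u * G u)"
proof -
  have finS: "finite S" using S finite_subset by auto
  define nS where "nS = (\<lambda>k. sorted_list_of_set S ! k)"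
  have bS: "bij_betw nS {0..<K} S" unfolding nS_def by (rule nth_sorted_bij[OF finS S(2)])
  define idx where "idx = the_inv_into {0..<K} nS"
  define U where "U = PiE {0..<K} (\<lambda>_. UNIV :: bool set)"
  define grid where "grid = {0..<N} \<times> {0..<T}"
  define J where "J = (\<lambda>k. (nS k, s)) ` {0..<K}"
  have finU: "finite U" unfolding U_def by (simp add: finite_PiE)
  have fin_d: "finite (designs N T)" unfolding designs_def by (simp add: finite_PiE)
  have ti_U: "test_input K S X s \<in> U" for X unfolding test_input_def U_def by auto
  have JG: "J \<subseteq> grid" unfolding J_def grid_def using bS S s by (auto simp: bij_betw_def)
  have injJ: "inj_on (\<lambda>k. (nS k, s)) {0..<K}" using bS by (auto simp: bij_betw_def inj_on_def)
  have fiber: "(\<Sum>X\<in>{X \<in> designs N T. test_input K S X s = u}. design_prob q N T X) = QA q {0..<K} u"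
    if u: "u \<in> U" for u
  proof -
    define w where "w = (\<lambda>p :: nat \<times> nat. u (idx (fst p)))"
    have "{X \<in> designs N T. test_input K S X s = u} = {X \<in> PiE grid (\<lambda>_. UNIV). \<forall>p\<in>J. X p = w p}"
    proof (intro Collect_cong conj_cong)
      show "(X \<in> designs N T) = (X \<in> PiE grid (\<lambda>_. UNIV))" for X unfolding designs_def grid_def ..
      fix X
      have "(test_input K S X s = u) = (\<forall>k\<in>{0..<K}. X (nS k, s) = u k)"
        using u unfolding test_input_def U_def nS_def
        by (auto simp: fun_eq_iff restrict_def PiE_def extensional_def)
      also have "\<dots> = (\<forall>p\<in>J. X p = w p)"
        unfolding J_def w_def idx_def using bS by (auto simp: bij_betw_def the_inv_into_f_f)
      finally show "(test_input K S X s = u) = (\<forall>p\<in>J. X p = w p)" .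
    qed
    then have "(\<Sum>X\<in>{X \<in> designs N T. test_input K S X s = u}. design_prob q N T X) =
        (\<Sum>X\<in>{X \<in> PiE grid (\<lambda>_. UNIV). \<forall>p\<in>J. X p = w p}. \<Prod>p\<in>grid. bern q (X p))"
      unfolding design_prob_def grid_def by simp
    also have "\<dots> = (\<Prod>p\<in>J. bern q (w p))"
      by (rule fiber_prod[OF _ JG]) (auto simp: grid_def bern_sum)
    also have "\<dots> = (\<Prod>k\<in>{0..<K}. bern q (w (nS k, s)))"
      unfolding J_def by (rule prod.reindex[OF injJ, unfolded comp_def])
    also have "\<dots> = QA q {0..<K} u"
      unfolding QA_def w_def idx_def using bS by (intro prod.cong) (auto simp: bij_betw_def the_inv_into_f_f)
    finally show ?thesis .
  qed
  have "(\<Sum>X\<in>designs N T. design_prob q N T X * G (test_input K S X s)) =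
      (\<Sum>u\<in>U. \<Sum>X\<in>{X \<in> designs N T. test_input K S X s = u}. design_prob q N T X * G (test_input K S X s))"
    by (rule sum.group[symmetric]) (use fin_d finU ti_U in auto)
  also have "\<dots> = (\<Sum>u\<in>U. (\<Sum>X\<in>{X \<in> designs N T. test_input K S X s = u}. design_prob q N T X) * G u)"
    by (intro sum.cong refl) (auto simp: sum_distrib_right)
  also have "\<dots> = (\<Sum>u\<in>U. QA q {0..<K} u * G u)"
    using fiber by (intro sum.cong refl) auto
  finally show ?thesis unfolding U_def .
qed

lemma vt_nonneg: "valid_channel K W \<Longrightarrow> 0 \<le> q \<Longrightarrow> q \<le> 1 \<Longrightarrow> 0 \<le> vt K q W A u b"
  unfolding vt_def valid_channel_def by (intro sum_nonneg mult_nonneg_nonneg QA_nonneg) auto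

lemma vt_ge:
  assumes vc: "valid_channel K W" and q: "0 \<le> q" "q \<le> 1" and u: "u \<in> PiE {0..<K} (\<lambda>_. UNIV)"
  shows "QA q A u * W u b \<le> vt K q W A u b"
  unfolding vt_def using u vc q
  by (intro member_le_sum[where f = "\<lambda>u1. QA q A u1 * W u1 b"]) (auto simp: finite_PiE valid_channel_def QA_nonneg)

lemma kl_tensor:
  assumes vc: "valid_channel K W" and q: "0 \<le> q" "q \<le> 1"
    and S: "S \<subseteq> {0..<N}" "card S = K" and A: "A \<subseteq> {0..<K}"
  shows "(\<Sum>X\<in>designs N T. \<Sum>Y\<in>outcomes T. design_prob q N T X * chan_prob K W S X T Y *
            log 2 (design_prob q N T X * chan_prob K W S X T Y /
              (design_prob q N T X * (\<Prod>t<T. vt K q W A (test_input K S X t) (Y t)))))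
         = real T * single_letter_mi K q W A"
proof -
  have Wn: "\<forall>u y. 0 \<le> W u y" and Ws: "\<forall>u. W u True + W u False = 1"
    using vc unfolding valid_channel_def by auto
  have finS: "finite S" using S finite_subset by auto
  define nS where "nS = (\<lambda>k. sorted_list_of_set S ! k)"
  have bS: "bij_betw nS {0..<K} S" unfolding nS_def by (rule nth_sorted_bij[OF finS S(2)])
  define u where "u = (\<lambda>X t. test_input K S X t)"
  define l where "l = (\<lambda>v b. log 2 (W v b / vt K q W A v b))"
  define G where "G = (\<lambda>v. \<Sum>b\<in>UNIV. W v b * l v b)"
  have uU: "u X t \<in> PiE {0..<K} (\<lambda>_. UNIV)" for X t unfolding u_def test_input_def by auto
  have P1: "design_prob q N T X * chan_prob K W S X T Y *
            log 2 (design_prob q N T X * chan_prob K W S X T Y /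
              (design_prob q N T X * (\<Prod>t<T. vt K q W A (test_input K S X t) (Y t))))
        = design_prob q N T X * ((\<Prod>t<T. W (u X t) (Y t)) * (\<Sum>s<T. l (u X s) (Y s)))"
    if X: "X \<in> designs N T" for X Y
  proof (cases "design_prob q N T X * chan_prob K W S X T Y = 0")
    case True
    then show ?thesis unfolding chan_prob_def u_def by auto
  next
    case False
    have D0: "design_prob q N T X \<noteq> 0" and C0: "(\<Prod>t<T. W (u X t) (Y t)) \<noteq> 0"
      using False unfolding chan_prob_def u_def by auto
    have Dp: "0 < design_prob q N T X" using D0 q unfolding design_prob_def
      by (metis bern_nonneg less_eq_real_def prod_nonneg)
    have bp: "bern q (X p) \<noteq> 0" if "p \<in> {0..<N} \<times> {0..<T}" for p
      using D0 that unfolding design_prob_def by auto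
    have Wp: "0 < W (u X t) (Y t)" if "t < T" for t
      using C0 that Wn by (metis finite_lessThan lessThan_iff less_eq_real_def prod_zero_iff)
    have vp: "0 < vt K q W A (u X t) (Y t)" if t: "t < T" for t
    proof -
      have finA: "finite A" using A finite_subset by auto
      have "\<forall>k\<in>A. bern q (u X t k) \<noteq> 0"
      proof
        fix k assume "k \<in> A"
        then have k: "k \<in> {0..<K}" using A by auto
        then have "nS k \<in> S" using bS by (auto simp: bij_betw_def)
        then have "(nS k, t) \<in> {0..<N} \<times> {0..<T}" using S t by auto
        then show "bern q (u X t k) \<noteq> 0" using bp k unfolding u_def test_input_def nS_def by auto
      qed
      then have "QA q A (u X t) \<noteq> 0" unfolding QA_def using finA by (simp add: prod_zero_iff)
      then have "0 < QA q A (u X t)" using QA_nonneg[OF q] by (simp add: less_le)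
      then have "0 < QA q A (u X t) * W (u X t) (Y t)" using Wp[OF t] by simp
      also have "\<dots> \<le> vt K q W A (u X t) (Y t)" by (rule vt_ge[OF vc q uU])
      finally show ?thesis .
    qed
    have "design_prob q N T X * chan_prob K W S X T Y / (design_prob q N T X * (\<Prod>t<T. vt K q W A (test_input K S X t) (Y t)))
        = (\<Prod>t<T. W (u X t) (Y t) / vt K q W A (u X t) (Y t))"
      using D0 unfolding chan_prob_def u_def by (simp add: prod_dividef)
    moreover have "log 2 (\<Prod>t<T. W (u X t) (Y t) / vt K q W A (u X t) (Y t)) = (\<Sum>s<T. l (u X s) (Y s))"
    proof -
      have "ln (\<Prod>t<T. W (u X t) (Y t) / vt K q W A (u X t) (Y t)) = (\<Sum>t<T. ln (W (u X t) (Y t) / vt K q W A (u X t) (Y t)))"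
        using Wp vp by (intro ln_prod) (auto dest: Wp vp)
      then show ?thesis unfolding l_def log_def by (simp add: sum_divide_distrib)
    qed
    ultimately show ?thesis unfolding chan_prob_def u_def by (simp add: mult.assoc)
  qed
  have P2: "(\<Sum>Y\<in>outcomes T. (\<Prod>t<T. W (u X t) (Y t)) * (\<Sum>s<T. l (u X s) (Y s))) = (\<Sum>s<T. G (u X s))" for X
  proof -
    have "(\<Sum>Y\<in>outcomes T. (\<Prod>t<T. W (u X t) (Y t)) * (\<Sum>s<T. l (u X s) (Y s)))
        = (\<Sum>s<T. \<Sum>Y\<in>outcomes T. (\<Prod>t<T. W (u X t) (Y t)) * l (u X s) (Y s))"
      by (simp add: sum_distrib_left sum.swap[of _ "outcomes T"])
    also have "\<dots> = (\<Sum>s<T. G (u X s))"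
    proof (intro sum.cong refl)
      fix s assume "s \<in> {..<T}"
      then show "(\<Sum>Y\<in>outcomes T. (\<Prod>t<T. W (u X t) (Y t)) * l (u X s) (Y s)) = G (u X s)"
        unfolding G_def using Ws by (intro outcomes_sum_one_coord) auto
    qed
    finally show ?thesis .
  qed
  have "(\<Sum>X\<in>designs N T. \<Sum>Y\<in>outcomes T. design_prob q N T X * chan_prob K W S X T Y *
            log 2 (design_prob q N T X * chan_prob K W S X T Y /
              (design_prob q N T X * (\<Prod>t<T. vt K q W A (test_input K S X t) (Y t)))))
      = (\<Sum>X\<in>designs N T. \<Sum>Y\<in>outcomes T. design_prob q N T X * ((\<Prod>t<T. W (u X t) (Y t)) * (\<Sum>s<T. l (u X s) (Y s))))"
    by (intro sum.cong refl P1)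
  also have "\<dots> = (\<Sum>X\<in>designs N T. design_prob q N T X * (\<Sum>Y\<in>outcomes T. (\<Prod>t<T. W (u X t) (Y t)) * (\<Sum>s<T. l (u X s) (Y s))))"
    by (simp add: sum_distrib_left)
  also have "\<dots> = (\<Sum>X\<in>designs N T. design_prob q N T X * (\<Sum>s<T. G (u X s)))"
    by (simp add: P2)
  also have "\<dots> = (\<Sum>s<T. \<Sum>X\<in>designs N T. design_prob q N T X * G (test_input K S X s))"
    unfolding u_def by (simp add: sum_distrib_left sum.swap[of _ "designs N T"])
  also have "\<dots> = (\<Sum>s<T. \<Sum>v\<in>PiE {0..<K} (\<lambda>_. UNIV). QA q {0..<K} v * G v)"
    by (intro sum.cong refl design_marginal[OF S]) auto
  also have "(\<Sum>v\<in>PiE {0..<K} (\<lambda>_. UNIV). QA q {0..<K} v * G v) = single_letter_mi K q W A"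
    unfolding mi_formula[OF A q Wn Ws] G_def l_def by (simp add: sum_distrib_left mult.assoc)
  finally show ?thesis by simp
qed



lemma logsum_log2:
  fixes p r :: "'a \<Rightarrow> real"
  assumes "finite Z" "\<forall>z\<in>Z. 0 \<le> p z" "\<forall>z\<in>Z. 0 \<le> r z" "\<forall>z\<in>Z. 0 < p z \<longrightarrow> 0 < r z"
  shows "(\<Sum>z\<in>Z. p z) * log 2 ((\<Sum>z\<in>Z. p z) / (\<Sum>z\<in>Z. r z)) \<le> (\<Sum>z\<in>Z. p z * log 2 (p z / r z))"
proof -
  have "(\<Sum>z\<in>Z. p z) * ln ((\<Sum>z\<in>Z. p z) / (\<Sum>z\<in>Z. r z)) / ln 2 \<le> (\<Sum>z\<in>Z. p z * ln (p z / r z)) / ln 2"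
    using logsum_ln[OF assms] by (intro divide_right_mono) auto
  then show ?thesis unfolding log_def by (simp add: sum_divide_distrib)
qed

lemma sum_pos_witness:
  fixes r :: "'a \<Rightarrow> real"
  assumes "finite Z" "\<forall>z\<in>Z. 0 \<le> r z" "z \<in> Z" "0 < r z"
  shows "0 < (\<Sum>z\<in>Z. r z)"
proof -
  have "r z \<le> (\<Sum>z\<in>Z. r z)" using assms by (intro member_le_sum) auto
  then show ?thesis using assms by simp
qed

lemma ref_pos:
  assumes vc: "valid_channel K W" and q: "0 \<le> q" "q \<le> 1"
    and S: "S \<subseteq> {0..<N}" "card S = K" and A: "A \<subseteq> {0..<K}" and X: "X \<in> designs N T"
    and nz: "design_prob q N T X * chan_prob K W S X T Y \<noteq> 0"
  shows "0 < design_prob q N T X * (\<Prod>t<T. vt K q W A (test_input K S X t) (Y t))"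
proof -
  have Wn: "\<forall>u y. 0 \<le> W u y" using vc unfolding valid_channel_def by auto
  have finS: "finite S" using S finite_subset by auto
  define nS where "nS = (\<lambda>k. sorted_list_of_set S ! k)"
  have bS: "bij_betw nS {0..<K} S" unfolding nS_def by (rule nth_sorted_bij[OF finS S(2)])
  have D0: "design_prob q N T X \<noteq> 0" and C0: "(\<Prod>t<T. W (test_input K S X t) (Y t)) \<noteq> 0"
    using nz unfolding chan_prob_def by auto
  have Dp: "0 < design_prob q N T X" using D0 q unfolding design_prob_def
    by (metis bern_nonneg less_eq_real_def prod_nonneg)
  have bp: "bern q (X p) \<noteq> 0" if "p \<in> {0..<N} \<times> {0..<T}" for p
    using D0 that unfolding design_prob_def by auto
  have Wp: "0 < W (test_input K S X t) (Y t)" if "t < T" for t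
    using C0 that Wn by (metis finite_lessThan lessThan_iff less_eq_real_def prod_zero_iff)
  have vp: "0 < vt K q W A (test_input K S X t) (Y t)" if t: "t < T" for t
  proof -
    have finA: "finite A" using A finite_subset by auto
    have "\<forall>k\<in>A. bern q (test_input K S X t k) \<noteq> 0"
    proof
      fix k assume "k \<in> A"
      then have k: "k \<in> {0..<K}" using A by auto
      then have "nS k \<in> S" using bS by (auto simp: bij_betw_def)
      then have "(nS k, t) \<in> {0..<N} \<times> {0..<T}" using S t by auto
      then show "bern q (test_input K S X t k) \<noteq> 0" using bp k unfolding test_input_def nS_def by auto
    qed
    then have "QA q A (test_input K S X t) \<noteq> 0" unfolding QA_def using finA by (simp add: prod_zero_iff)
    then have "0 < QA q A (test_input K S X t)" using QA_nonneg[OF q] by (simp add: less_le)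
    then have "0 < QA q A (test_input K S X t) * W (test_input K S X t) (Y t)" using Wp[OF t] by simp
    also have "\<dots> \<le> vt K q W A (test_input K S X t) (Y t)"
      by (rule vt_ge[OF vc q]) (auto simp: test_input_def)
    finally show ?thesis .
  qed
  have "0 < (\<Prod>t<T. vt K q W A (test_input K S X t) (Y t))" using vp by (intro prod_pos) auto
  then show ?thesis using Dp by simp
qed

lemma vt_sum_one:
  assumes vc: "valid_channel K W" and A: "A \<subseteq> {0..<K}"
  shows "vt K q W A u True + vt K q W A u False = 1"
proof -
  have Ws: "\<forall>u. W u True + W u False = 1" using vc unfolding valid_channel_def by auto
  have "vt K q W A u True + vt K q W A u False =
      (\<Sum>u1\<in>{u1 \<in> PiE {0..<K} (\<lambda>_. UNIV). \<forall>k\<in>{0..<K} - A. u1 k = u k}. QA q A u1)"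
    unfolding vt_def using Ws by (simp add: sum.distrib[symmetric] flip: distrib_left)
  also have "\<dots> = (\<Sum>u1\<in>{u1 \<in> PiE {0..<K} (\<lambda>_. UNIV). \<forall>k\<in>{0..<K} - A. u1 k = u k}.
       \<Prod>k\<in>{0..<K}. (if k \<in> A then bern q (u1 k) else 1))"
  proof (intro sum.cong refl)
    fix u1
    have "{0..<K} \<inter> A = A" using A by blast
    then show "QA q A u1 = (\<Prod>k\<in>{0..<K}. (if k \<in> A then bern q (u1 k) else 1))"
      unfolding QA_def by (simp add: prod.If_cases)
  qed
  also have "\<dots> = (\<Prod>k\<in>{0..<K} - A. (if k \<in> A then bern q (u k) else 1))"
    by (rule fiber_prod) (auto simp: bern_sum)
  also have "\<dots> = 1" by simp
  finally show ?thesis .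
qed

lemma P_sum_one:
  assumes vc: "valid_channel K W" and q: "0 \<le> q" "q \<le> 1"
  shows "(\<Sum>X\<in>designs N T. \<Sum>Y\<in>outcomes T. design_prob q N T X * chan_prob K W S X T Y) = 1"
proof -
  have Ws: "\<forall>u. W u True + W u False = 1" using vc unfolding valid_channel_def by auto
  have "(\<Sum>X\<in>designs N T. \<Sum>Y\<in>outcomes T. design_prob q N T X * chan_prob K W S X T Y)
      = (\<Sum>X\<in>designs N T. design_prob q N T X * (\<Sum>Y\<in>outcomes T. chan_prob K W S X T Y))"
    by (simp add: sum_distrib_left)
  also have "\<dots> = (\<Sum>X\<in>designs N T. design_prob q N T X)"
    unfolding chan_prob_def using Ws by (subst outcomes_prod_one) auto
  also have "\<dots> = 1" by (rule design_prob_sum_one[OF q])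
  finally show ?thesis .
qed

lemma R_sum_one:
  assumes vc: "valid_channel K W" and q: "0 \<le> q" "q \<le> 1" and A: "A \<subseteq> {0..<K}"
  shows "(\<Sum>X\<in>designs N T. \<Sum>Y\<in>outcomes T. design_prob q N T X * (\<Prod>t<T. vt K q W A (test_input K S X t) (Y t))) = 1"
proof -
  have "(\<Sum>X\<in>designs N T. \<Sum>Y\<in>outcomes T. design_prob q N T X * (\<Prod>t<T. vt K q W A (test_input K S X t) (Y t)))
      = (\<Sum>X\<in>designs N T. design_prob q N T X * (\<Sum>Y\<in>outcomes T. \<Prod>t<T. vt K q W A (test_input K S X t) (Y t)))"
    by (simp add: sum_distrib_left)
  also have "\<dots> = (\<Sum>X\<in>designs N T. design_prob q N T X)"
    using vt_sum_one[OF vc A] by (subst outcomes_prod_one) auto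
  also have "\<dots> = 1" by (rule design_prob_sum_one[OF q])
  finally show ?thesis .
qed



lemma sum_split_pred:
  assumes "finite A"
  shows "sum f {x \<in> A. P x} + sum f {x \<in> A. \<not> P x} = sum f A"
proof -
  have "{x \<in> A. P x} \<union> {x \<in> A. \<not> P x} = A" by blast
  moreover have "{x \<in> A. P x} \<inter> {x \<in> A. \<not> P x} = {}" by blast
  ultimately show ?thesis using assms sum.union_disjoint[of "{x \<in> A. P x}" "{x \<in> A. \<not> P x}" f] by simp
qed

lemma sum_filter_ind:
  assumes "finite A"
  shows "sum f {x \<in> A. P x} = (\<Sum>x\<in>A. if P x then f x else 0)"
  using assms by (simp add: sum.inter_filter)

lemma sorted_nth_mem:
  assumes "finite S" "card S = K" "k < K"
  shows "sorted_list_of_set S ! k \<in> S"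
  using assms by (metis length_sorted_list_of_set nth_mem set_sorted_list_of_set)

lemma positions_eq:
  assumes "finite S" "card S = K" "S1 \<inter> s2 = {}" "S = S1 \<union> s2"
  shows "positions K S S1 = {k \<in> {0..<K}. sorted_list_of_set S ! k \<in> S - s2}"
  unfolding positions_def using assms sorted_nth_mem[OF assms(1,2)] by auto

lemma positions_sub: "positions K S S1 \<subseteq> {0..<K}" unfolding positions_def by auto

lemma sum_pos_exists:
  fixes f :: "'a \<Rightarrow> real"
  assumes "0 < sum f A"
  shows "\<exists>z\<in>A. 0 < f z"
proof (rule ccontr)
  assume "\<not> (\<exists>z\<in>A. 0 < f z)"
  then have "sum f A \<le> 0" by (intro sum_nonpos) (auto simp: not_less)
  then show False using assms by simp
qed

lemma fano_family:
  fixes s2 :: "nat set" and \<epsilon> M :: real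
  assumes eps: "\<epsilon> > 0" and vc: "valid_channel K W" and q: "0 \<le> q" "q \<le> 1"
    and KN: "K \<le> N" and i: "1 \<le> i" "i \<le> K"
    and s2: "s2 \<subseteq> {0..<N}" "card s2 = K - i"
    and err: "(\<Sum>S1\<in>{S1. S1 \<subseteq> {0..<N} - s2 \<and> card S1 = i}.
                \<Sum>X\<in>designs N T. \<Sum>Y\<in>outcomes T. design_prob q N T X * chan_prob K W (S1 \<union> s2) X T Y *
                   (if dec X Y = S1 \<union> s2 then 0 else 1))
             \<le> real (card {S1. S1 \<subseteq> {0..<N} - s2 \<and> card S1 = i}) * (min \<epsilon> 1 / 9)^2"
    and MI: "\<forall>S1\<in>{S1. S1 \<subseteq> {0..<N} - s2 \<and> card S1 = i}. single_letter_mi K q W (positions K (S1 \<union> s2) S1) = M"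
  shows "(1 - \<epsilon>) * log 2 (real (card {S1. S1 \<subseteq> {0..<N} - s2 \<and> card S1 = i})) \<le> real T * M"
proof -
  define Fam where "Fam = {S1. S1 \<subseteq> {0..<N} - s2 \<and> card S1 = i}"
  define C where "C = card Fam"
  define \<delta> where "\<delta> = (min \<epsilon> 1 / 9)^2"
  have fs2: "finite s2" using s2 finite_subset by auto
  have cardM: "card ({0..<N} - s2) = N - K + i" using s2 fs2 KN i by (simp add: card_Diff_subset)
  have CC: "C = (N - K + i) choose i" unfolding C_def Fam_def using n_subsets[of "{0..<N} - s2" i] cardM by simp
  have C1: "C \<ge> 1" unfolding CC using KN by (simp add: Suc_le_eq)
  have Cpos: "0 < real C" using C1 by simp
  have finFam: "finite Fam" unfolding Fam_def by simp
  have FamI: "S1 \<subseteq> {0..<N} - s2" "card S1 = i" if "S1 \<in> Fam" for S1 using that unfolding Fam_def by auto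
  have famS: "S1 \<union> s2 \<subseteq> {0..<N}" "card (S1 \<union> s2) = K" "finite (S1 \<union> s2)" "S1 \<inter> s2 = {}"
    if "S1 \<in> Fam" for S1
  proof -
    have a: "S1 \<subseteq> {0..<N} - s2" "card S1 = i" using FamI[OF that] by auto
    have fS1: "finite S1" using a finite_subset by auto
    show "S1 \<union> s2 \<subseteq> {0..<N}" "S1 \<inter> s2 = {}" "finite (S1 \<union> s2)" using a s2 fS1 fs2 by auto
    show "card (S1 \<union> s2) = K" using a s2 fS1 fs2 i by (subst card_Un_disjoint) auto
  qed
  obtain S10 where S10: "S10 \<in> Fam"
  proof -
    have "Fam \<noteq> {}" using C1 unfolding C_def by auto
    then show ?thesis using that by blast
  qed
  define S0 where "S0 = S10 \<union> s2"
  define A0 where "A0 = positions K S0 S10"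
  define D where "D = (\<lambda>X. design_prob q N T X)"
  define P where "P = (\<lambda>S1 X Y. D X * chan_prob K W (S1 \<union> s2) X T Y)"
  define R where "R = (\<lambda>X Y. D X * (\<Prod>t<T. vt K q W A0 (test_input K S0 X t) (Y t)))"
  have R_alt: "R X Y = D X * (\<Prod>t<T. vt K q W (positions K (S1 \<union> s2) S1) (test_input K (S1 \<union> s2) X t) (Y t))"
    if S1: "S1 \<in> Fam" for S1 X Y
  proof -
    have "vt K q W A0 (test_input K S0 X t) b =
          vt K q W (positions K (S1 \<union> s2) S1) (test_input K (S1 \<union> s2) X t) b" for t b
    proof -
      have "vt K q W {k \<in> {0..<K}. sorted_list_of_set S0 ! k \<in> S0 - s2}
              (restrict (\<lambda>k. (\<lambda>j. X (j, t)) (sorted_list_of_set S0 ! k)) {0..<K}) b =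
            vt K q W {k \<in> {0..<K}. sorted_list_of_set (S1 \<union> s2) ! k \<in> (S1 \<union> s2) - s2}
              (restrict (\<lambda>k. (\<lambda>j. X (j, t)) (sorted_list_of_set (S1 \<union> s2) ! k)) {0..<K}) b"
        using famS[OF S10] famS[OF S1] unfolding S0_def
        by (intro vt_eq[OF vc]) auto
      moreover have "A0 = {k \<in> {0..<K}. sorted_list_of_set S0 ! k \<in> S0 - s2}"
        unfolding A0_def S0_def using famS[OF S10] by (intro positions_eq) auto
      moreover have "positions K (S1 \<union> s2) S1 = {k \<in> {0..<K}. sorted_list_of_set (S1 \<union> s2) ! k \<in> (S1 \<union> s2) - s2}"
        using famS[OF S1] by (intro positions_eq) auto
      ultimately show ?thesis unfolding test_input_def by simp
    qed
    then show ?thesis unfolding R_def by simp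
  qed
  have KL: "(\<Sum>X\<in>designs N T. \<Sum>Y\<in>outcomes T. P S1 X Y * log 2 (P S1 X Y / R X Y)) = real T * M"
    if S1: "S1 \<in> Fam" for S1
    using kl_tensor[OF vc q famS(1,2)[OF S1] positions_sub[of K "S1 \<union> s2" S1], of T] MI S1
    unfolding P_def D_def R_alt[OF S1] Fam_def by simp
  have Psum: "(\<Sum>X\<in>designs N T. \<Sum>Y\<in>outcomes T. P S1 X Y) = 1" for S1
    unfolding P_def D_def by (rule P_sum_one[OF vc q])
  have Rsum: "(\<Sum>X\<in>designs N T. \<Sum>Y\<in>outcomes T. R X Y) = 1"
    unfolding R_def D_def unfolding A0_def by (rule R_sum_one[OF vc q positions_sub])
  have Dn: "0 \<le> D X" for X unfolding D_def design_prob_def by (intro prod_nonneg) (simp add: bern_nonneg q)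
  have Pn: "0 \<le> P S1 X Y" for S1 X Y
    unfolding P_def chan_prob_def using Dn vc by (intro mult_nonneg_nonneg prod_nonneg) (auto simp: valid_channel_def)
  have Rn: "0 \<le> R X Y" for X Y
    unfolding R_def using Dn vt_nonneg[OF vc q] by (intro mult_nonneg_nonneg prod_nonneg) auto
  have ac: "0 < R X Y" if "S1 \<in> Fam" "X \<in> designs N T" "0 < P S1 X Y" for S1 X Y
    using ref_pos[OF vc q famS(1,2)[OF that(1)] positions_sub[of K "S1 \<union> s2" S1] that(2), of Y] that R_alt[OF that(1)]
    unfolding P_def D_def by (metis less_irrefl mult_eq_0_iff)
  define Z where "Z = Fam \<times> (designs N T \<times> outcomes T)"
  define p where "p = (\<lambda>z. P (fst z) (fst (snd z)) (snd (snd z)) / real C)"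
  define r where "r = (\<lambda>z :: nat set \<times> (nat \<times> nat \<Rightarrow> bool) \<times> (nat \<Rightarrow> bool). R (fst (snd z)) (snd (snd z)) / real C)"
  define E where "E = (\<lambda>z. dec (fst (snd z)) (snd (snd z)) = fst z \<union> s2)"
  have finD: "finite (designs N T)" unfolding designs_def by (simp add: finite_PiE)
  have finO: "finite (outcomes T)" unfolding outcomes_def by (simp add: finite_PiE)
  have finZ: "finite Z" unfolding Z_def using finFam finD finO by simp
  have sumZ: "(\<Sum>z\<in>Z. g z) = (\<Sum>S1\<in>Fam. \<Sum>X\<in>designs N T. \<Sum>Y\<in>outcomes T. g (S1, (X, Y)))" for g :: "_ \<Rightarrow> real"
    unfolding Z_def by (simp add: sum_times)
  have pn: "\<forall>z\<in>Z. 0 \<le> p z" unfolding p_def using Pn Cpos by simp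
  have rn: "\<forall>z\<in>Z. 0 \<le> r z" unfolding r_def using Rn Cpos by simp
  have acZ: "\<forall>z\<in>Z. 0 < p z \<longrightarrow> 0 < r z"
    unfolding p_def r_def Z_def using ac Cpos by (auto simp: divide_pos_pos zero_less_divide_iff)
  have totp: "(\<Sum>z\<in>Z. p z) = 1"
  proof -
    have "(\<Sum>z\<in>Z. p z) = (\<Sum>S1\<in>Fam. (\<Sum>X\<in>designs N T. \<Sum>Y\<in>outcomes T. P S1 X Y) / real C)"
      unfolding sumZ p_def by (simp add: sum_divide_distrib)
    also have "\<dots> = real (card Fam) / real C" using Psum by simp
    finally show ?thesis using Cpos unfolding C_def by simp
  qed
  have totr: "(\<Sum>z\<in>Z. r z) = 1"
  proof -
    have "(\<Sum>z\<in>Z. r z) = (\<Sum>S1\<in>Fam. (\<Sum>X\<in>designs N T. \<Sum>Y\<in>outcomes T. R X Y) / real C)"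
      unfolding sumZ r_def by (simp add: sum_divide_distrib)
    also have "\<dots> = real (card Fam) / real C" using Rsum by simp
    finally show ?thesis using Cpos unfolding C_def by simp
  qed
  have Jeq: "(\<Sum>z\<in>Z. p z * log 2 (p z / r z)) = real T * M"
  proof -
    have "(\<Sum>z\<in>Z. p z * log 2 (p z / r z)) =
        (\<Sum>S1\<in>Fam. (\<Sum>X\<in>designs N T. \<Sum>Y\<in>outcomes T. P S1 X Y * log 2 (P S1 X Y / R X Y)) / real C)"
      unfolding sumZ p_def r_def using Cpos by (simp add: sum_divide_distrib)
    also have "\<dots> = (\<Sum>S1\<in>Fam. real T * M / real C)" using KL by (intro sum.cong) auto
    also have "\<dots> = real T * M" using Cpos unfolding C_def by simp
    finally show ?thesis .
  qed
  define a where "a = (\<Sum>z\<in>{z\<in>Z. E z}. p z)"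
  define b where "b = (\<Sum>z\<in>{z\<in>Z. \<not> E z}. p z)"
  define rE where "rE = (\<Sum>z\<in>{z\<in>Z. E z}. r z)"
  define rF where "rF = (\<Sum>z\<in>{z\<in>Z. \<not> E z}. r z)"
  have ab: "a + b = 1" unfolding a_def b_def using sum_split_pred[OF finZ, of p E] totp by simp
  have rEF: "rE + rF = 1" unfolding rE_def rF_def using sum_split_pred[OF finZ, of r E] totr by simp
  have b0: "0 \<le> b" unfolding b_def using pn by (intro sum_nonneg) auto
  have rE0: "0 \<le> rE" unfolding rE_def using rn by (intro sum_nonneg) auto
  have rF0: "0 \<le> rF" unfolding rF_def using rn by (intro sum_nonneg) auto
  have a_err: "a = 1 - (\<Sum>S1\<in>Fam. \<Sum>X\<in>designs N T. \<Sum>Y\<in>outcomes T. P S1 X Y * (if dec X Y = S1 \<union> s2 then 0 else 1)) / real C"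
  proof -
    have "a = (\<Sum>z\<in>Z. if E z then p z else 0)" unfolding a_def by (rule sum_filter_ind[OF finZ])
    also have "\<dots> = (\<Sum>S1\<in>Fam. \<Sum>X\<in>designs N T. \<Sum>Y\<in>outcomes T.
        (P S1 X Y - P S1 X Y * (if dec X Y = S1 \<union> s2 then 0 else 1)) / real C)"
      unfolding sumZ p_def E_def by (intro sum.cong refl) auto
    also have "\<dots> = (\<Sum>S1\<in>Fam. (1 - (\<Sum>X\<in>designs N T. \<Sum>Y\<in>outcomes T. P S1 X Y * (if dec X Y = S1 \<union> s2 then 0 else 1))) / real C)"
      using Psum by (simp add: sum_divide_distrib[symmetric] sum_subtractf)
    also have "\<dots> = (real (card Fam) - (\<Sum>S1\<in>Fam. \<Sum>X\<in>designs N T. \<Sum>Y\<in>outcomes T. P S1 X Y * (if dec X Y = S1 \<union> s2 then 0 else 1))) / real C"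
      by (simp add: sum_divide_distrib[symmetric] sum_subtractf)
    also have "\<dots> = 1 - (\<Sum>S1\<in>Fam. \<Sum>X\<in>designs N T. \<Sum>Y\<in>outcomes T. P S1 X Y * (if dec X Y = S1 \<union> s2 then 0 else 1)) / real C"
      using Cpos unfolding C_def by (simp add: diff_divide_distrib)
    finally show ?thesis .
  qed
  have a1: "1 - \<delta> \<le> a"
  proof -
    have "(\<Sum>S1\<in>Fam. \<Sum>X\<in>designs N T. \<Sum>Y\<in>outcomes T. P S1 X Y * (if dec X Y = S1 \<union> s2 then 0 else 1)) \<le> real C * \<delta>"
      using err unfolding P_def D_def Fam_def[symmetric] C_def[symmetric] \<delta>_def by simp
    then have "(\<Sum>S1\<in>Fam. \<Sum>X\<in>designs N T. \<Sum>Y\<in>outcomes T. P S1 X Y * (if dec X Y = S1 \<union> s2 then 0 else 1)) / real C \<le> \<delta>"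
      using Cpos by (simp add: divide_le_eq mult.commute)
    then show ?thesis unfolding a_err by simp
  qed
  have \<delta>1: "\<delta> \<le> 1/81" unfolding \<delta>_def using eps
    by (simp add: power_divide) (smt (verit) min.cobounded2 min_def power_le_one)
  have apos: "0 < a" using a1 \<delta>1 by simp
  have rEbound: "rE \<le> 1 / real C"
  proof -
    have "rE = (\<Sum>z\<in>Z. if E z then r z else 0)" unfolding rE_def by (rule sum_filter_ind[OF finZ])
    also have "\<dots> = (\<Sum>S1\<in>Fam. \<Sum>X\<in>designs N T. \<Sum>Y\<in>outcomes T. if dec X Y = S1 \<union> s2 then R X Y / real C else 0)"
      unfolding sumZ r_def E_def by (intro sum.cong refl) simp
    also have "\<dots> = (\<Sum>X\<in>designs N T. \<Sum>S1\<in>Fam. \<Sum>Y\<in>outcomes T. if dec X Y = S1 \<union> s2 then R X Y / real C else 0)"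
      by (rule sum.swap)
    also have "\<dots> = (\<Sum>X\<in>designs N T. \<Sum>Y\<in>outcomes T. \<Sum>S1\<in>Fam. if dec X Y = S1 \<union> s2 then R X Y / real C else 0)"
      by (intro sum.cong refl) (rule sum.swap)
    also have "\<dots> \<le> (\<Sum>X\<in>designs N T. \<Sum>Y\<in>outcomes T. R X Y / real C)"
    proof (intro sum_mono)
      fix X Y
      have "(\<Sum>S1\<in>Fam. if dec X Y = S1 \<union> s2 then R X Y / real C else 0) =
          real (card {S1\<in>Fam. dec X Y = S1 \<union> s2}) * (R X Y / real C)"
        using finFam by (simp add: sum.If_cases Int_def conj_commute)
      also have "\<dots> \<le> 1 * (R X Y / real C)"
      proof (intro mult_right_mono)
        have "{S1\<in>Fam. dec X Y = S1 \<union> s2} \<subseteq> {dec X Y - s2}" using famS(4) by blast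
        then have "card {S1\<in>Fam. dec X Y = S1 \<union> s2} \<le> card {dec X Y - s2}" by (intro card_mono) auto
        then show "real (card {S1\<in>Fam. dec X Y = S1 \<union> s2}) \<le> 1" by simp
        show "0 \<le> R X Y / real C" using Rn Cpos by simp
      qed
      finally show "(\<Sum>S1\<in>Fam. if dec X Y = S1 \<union> s2 then R X Y / real C else 0) \<le> R X Y / real C" by simp
    qed
    also have "\<dots> = 1 / real C" using Rsum by (simp add: sum_divide_distrib[symmetric])
    finally show ?thesis .
  qed
  have rEpos: "0 < rE"
  proof -
    obtain z where z: "z \<in> {z\<in>Z. E z}" "0 < p z" using sum_pos_exists[of p] apos unfolding a_def by blast
    then have "0 < r z" using acZ by auto
    then show ?thesis unfolding rE_def using finZ rn z by (intro sum_pos_witness[of _ _ z]) auto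
  qed
  have rFpos: "a < 1 \<longrightarrow> 0 < rF"
  proof
    assume "a < 1"
    then have "0 < b" using ab by simp
    then obtain z where z: "z \<in> {z\<in>Z. \<not> E z}" "0 < p z" using sum_pos_exists[of p] unfolding b_def by blast
    then have "0 < r z" using acZ by auto
    then show "0 < rF" unfolding rF_def using finZ rn z by (intro sum_pos_witness[of _ _ z]) auto
  qed
  have J0: "0 \<le> real T * M"
  proof -
    have "(\<Sum>z\<in>Z. p z) * log 2 ((\<Sum>z\<in>Z. p z) / (\<Sum>z\<in>Z. r z)) \<le> (\<Sum>z\<in>Z. p z * log 2 (p z / r z))"
      by (rule logsum_log2[OF finZ pn rn acZ])
    then show ?thesis using totp totr Jeq by simp
  qed
  have JF: "a * log 2 (a / rE) + (1 - a) * log 2 ((1 - a) / rF) \<le> real T * M"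
  proof -
    have fE: "finite {z\<in>Z. E z}" "finite {z\<in>Z. \<not> E z}" using finZ by auto
    have "a * log 2 (a / rE) \<le> (\<Sum>z\<in>{z\<in>Z. E z}. p z * log 2 (p z / r z))"
      unfolding a_def rE_def using pn rn acZ by (intro logsum_log2[OF fE(1)]) auto
    moreover have "b * log 2 (b / rF) \<le> (\<Sum>z\<in>{z\<in>Z. \<not> E z}. p z * log 2 (p z / r z))"
      unfolding b_def rF_def using pn rn acZ by (intro logsum_log2[OF fE(2)]) auto
    moreover have "(\<Sum>z\<in>{z\<in>Z. E z}. p z * log 2 (p z / r z)) + (\<Sum>z\<in>{z\<in>Z. \<not> E z}. p z * log 2 (p z / r z))
        = real T * M" using sum_split_pred[OF finZ, of "\<lambda>z. p z * log 2 (p z / r z)" E] Jeq by simp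
    moreover have "b = 1 - a" using ab by simp
    ultimately show ?thesis by simp
  qed
  have "(1 - \<epsilon>) * log 2 (real C) \<le> real T * M"
    by (rule fano_numeric[OF eps a1[unfolded \<delta>_def] _ C1 J0 JF rEpos rEbound _ rFpos])
       (use ab b0 rEF rE0 in auto)
  then show ?thesis unfolding C_def Fam_def .
qed



lemma double_count:
  fixes \<phi> :: "nat set \<Rightarrow> real"
  assumes iK: "i \<le> K" and KN: "K \<le> N"
  shows "(\<Sum>s2\<in>{s2. s2 \<subseteq> {0..<N} \<and> card s2 = K - i}. \<Sum>S1\<in>{S1. S1 \<subseteq> {0..<N} - s2 \<and> card S1 = i}. \<phi> (S1 \<union> s2))
       = real (K choose (K - i)) * (\<Sum>S\<in>ksubsets N K. \<phi> S)"
proof -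
  define \<Sigma>2 where "\<Sigma>2 = {s2. s2 \<subseteq> {0..<N} \<and> card s2 = K - i}"
  define Fam where "Fam = (\<lambda>s2. {S1. S1 \<subseteq> {0..<N} - s2 \<and> card S1 = i})"
  define Sub where "Sub = (\<lambda>S :: nat set. {s2. s2 \<subseteq> S \<and> card s2 = K - i})"
  define h where "h = (\<lambda>(s2 :: nat set, S1 :: nat set). (S1 \<union> s2, s2))"
  define h' where "h' = (\<lambda>(S :: nat set, s2 :: nat set). (s2, S - s2))"
  have fin2: "finite \<Sigma>2" unfolding \<Sigma>2_def by (rule finite_subset[of _ "Pow {0..<N}"]) auto
  have finF: "finite (Fam s2)" for s2 unfolding Fam_def by (rule finite_subset[of _ "Pow {0..<N}"]) auto
  have finK: "finite (ksubsets N K)" unfolding ksubsets_def by (rule finite_subset[of _ "Pow {0..<N}"]) auto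
  have finSub: "finite (Sub S)" if "S \<in> ksubsets N K" for S
  proof -
    have "finite S" using that unfolding ksubsets_def by (auto intro: finite_subset)
    moreover have "Sub S \<subseteq> Pow S" unfolding Sub_def by auto
    ultimately show ?thesis by (metis finite_Pow_iff finite_subset)
  qed
  have hb: "bij_betw h (Sigma \<Sigma>2 Fam) (Sigma (ksubsets N K) Sub)"
  proof (rule bij_betw_byWitness[where f' = h'])
    show "\<forall>a\<in>Sigma \<Sigma>2 Fam. h' (h a) = a" unfolding h_def h'_def Fam_def by auto
    show "\<forall>a'\<in>Sigma (ksubsets N K) Sub. h (h' a') = a'" unfolding h_def h'_def Sub_def by auto
    show "h ` Sigma \<Sigma>2 Fam \<subseteq> Sigma (ksubsets N K) Sub"
    proof
      fix x assume "x \<in> h ` Sigma \<Sigma>2 Fam"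
      then obtain s2 S1 where x: "x = (S1 \<union> s2, s2)" "s2 \<in> \<Sigma>2" "S1 \<in> Fam s2" unfolding h_def by auto
      have f: "finite s2" "finite S1" using x unfolding \<Sigma>2_def Fam_def by (auto intro: finite_subset)
      have "card (S1 \<union> s2) = K" using x f iK unfolding \<Sigma>2_def Fam_def by (subst card_Un_disjoint) auto
      then show "x \<in> Sigma (ksubsets N K) Sub" using x unfolding \<Sigma>2_def Fam_def ksubsets_def Sub_def by auto
    qed
    show "h' ` Sigma (ksubsets N K) Sub \<subseteq> Sigma \<Sigma>2 Fam"
    proof
      fix x assume "x \<in> h' ` Sigma (ksubsets N K) Sub"
      then obtain S s2 where x: "x = (s2, S - s2)" "S \<in> ksubsets N K" "s2 \<in> Sub S" unfolding h'_def by auto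
      have f: "finite S" "finite s2" using x unfolding ksubsets_def Sub_def by (auto intro: finite_subset)
      have "card (S - s2) = i" using x f iK unfolding ksubsets_def Sub_def by (simp add: card_Diff_subset)
      then show "x \<in> Sigma \<Sigma>2 Fam" using x unfolding \<Sigma>2_def Fam_def ksubsets_def Sub_def by auto
    qed
  qed
  have "(\<Sum>s2\<in>\<Sigma>2. \<Sum>S1\<in>Fam s2. \<phi> (S1 \<union> s2)) = (\<Sum>(s2, S1)\<in>Sigma \<Sigma>2 Fam. \<phi> (S1 \<union> s2))"
    by (rule sum.Sigma[OF fin2]) (simp add: finF)
  also have "\<dots> = (\<Sum>y\<in>Sigma \<Sigma>2 Fam. \<phi> (fst (h y)))"
    unfolding h_def by (intro sum.cong refl) auto
  also have "\<dots> = (\<Sum>z\<in>Sigma (ksubsets N K) Sub. \<phi> (fst z))"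
    by (rule sum.reindex_bij_betw[OF hb, of "\<lambda>z. \<phi> (fst z)"])
  also have "\<dots> = (\<Sum>S\<in>ksubsets N K. \<Sum>s2\<in>Sub S. \<phi> S)"
    by (subst sum.Sigma[OF finK]) (auto simp: finSub split_def)
  also have "\<dots> = (\<Sum>S\<in>ksubsets N K. real (K choose (K - i)) * \<phi> S)"
  proof (intro sum.cong refl)
    fix S assume "S \<in> ksubsets N K"
    then have "finite S" "card S = K" unfolding ksubsets_def by (auto intro: finite_subset)
    then have "card (Sub S) = K choose (K - i)" unfolding Sub_def using n_subsets[of S "K - i"] by simp
    then show "(\<Sum>s2\<in>Sub S. \<phi> S) = real (K choose (K - i)) * \<phi> S" by simp
  qed
  finally show ?thesis unfolding \<Sigma>2_def Fam_def by (simp add: sum_distrib_left)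
qed

lemma card_positions:
  assumes "finite S" "card S = K" "S1 \<subseteq> S"
  shows "card (positions K S S1) = card S1"
  unfolding positions_def by (rule card_preimage_bij[OF nth_sorted_bij[OF assms(1,2)] assms(3)])

lemma theorem3_core:
  fixes \<epsilon> :: real
  assumes eps: "\<epsilon> > 0" and KN: "K \<le> N" and q: "0 \<le> q" "q \<le> 1" and vc: "valid_channel K W"
    and ep: "error_prob N K T q W dec \<le> (min \<epsilon> 1 / 9)^2"
    and S: "S \<in> ksubsets N K" and i: "i \<in> {1..K}" and X: "(S1, S2) \<in> Xi S K i"
  shows "(1 - \<epsilon>) * log 2 (real ((N - K + i) choose i)) \<le> real T * single_letter_mi K q W (positions K S S1)"
proof -
  define \<delta> where "\<delta> = (min \<epsilon> 1 / 9)^2"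
  define M where "M = single_letter_mi K q W (positions K S S1)"
  define \<phi> where "\<phi> = (\<lambda>S'. \<Sum>X\<in>designs N T. \<Sum>Y\<in>outcomes T. design_prob q N T X * chan_prob K W S' X T Y *
                   (if dec X Y = S' then 0 else 1))"
  define \<Sigma>2 where "\<Sigma>2 = {s2. s2 \<subseteq> {0..<N} \<and> card s2 = K - i}"
  define Fam where "Fam = (\<lambda>s2. {S1. S1 \<subseteq> {0..<N} - s2 \<and> card S1 = i})"
  define CC where "CC = (N - K + i) choose i"
  define c where "c = K choose (K - i)"
  define KS where "KS = ksubsets N K"
  have iK: "1 \<le> i" "i \<le> K" using i by auto
  have Sfin: "finite S" "card S = K" "S \<subseteq> {0..<N}" using S unfolding ksubsets_def by (auto intro: finite_subset)
  have X': "S1 \<inter> S2 = {}" "S1 \<union> S2 = S" "card S1 = i" using X unfolding Xi_def by auto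
  have cardM: "card (positions K S S1) = i" using card_positions[OF Sfin(1,2)] X' by auto
  have MI: "single_letter_mi K q W (positions K (S1' \<union> s2) S1') = M" if "s2 \<in> \<Sigma>2" "S1' \<in> Fam s2" for s2 S1'
  proof -
    have a: "s2 \<subseteq> {0..<N}" "card s2 = K - i" "S1' \<subseteq> {0..<N} - s2" "card S1' = i"
      using that unfolding \<Sigma>2_def Fam_def by auto
    have f: "finite s2" "finite S1'" using a by (auto intro: finite_subset)
    have cK: "card (S1' \<union> s2) = K" using a f iK by (subst card_Un_disjoint) auto
    have "card (positions K (S1' \<union> s2) S1') = i" using card_positions[of "S1' \<union> s2" K S1'] f cK a by auto
    then show ?thesis unfolding M_def using cardM by (intro mi_sym[OF vc positions_sub positions_sub]) simp
  qed
  have fin2: "finite \<Sigma>2" unfolding \<Sigma>2_def by (rule finite_subset[of _ "Pow {0..<N}"]) auto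
  have ne2: "\<Sigma>2 \<noteq> {}"
  proof -
    have "{0..<K - i} \<in> \<Sigma>2" unfolding \<Sigma>2_def using KN by auto
    then show ?thesis by blast
  qed
  have cardFam: "card (Fam s2) = CC" if "s2 \<in> \<Sigma>2" for s2
  proof -
    have "finite s2" "s2 \<subseteq> {0..<N}" "card s2 = K - i" using that unfolding \<Sigma>2_def by (auto intro: finite_subset)
    then have "card ({0..<N} - s2) = N - K + i" using KN iK by (simp add: card_Diff_subset)
    then show ?thesis unfolding Fam_def CC_def using n_subsets[of "{0..<N} - s2" i] by simp
  qed
  have cardKS: "card KS = N choose K" unfolding KS_def ksubsets_def using n_subsets[of "{0..<N}" K] by simp
  have KSpos: "0 < card KS" unfolding cardKS using KN by simp
  have dc1: "(\<Sum>s2\<in>\<Sigma>2. \<Sum>S1\<in>Fam s2. \<phi> (S1 \<union> s2)) = real c * (\<Sum>S\<in>KS. \<phi> S)"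
    unfolding \<Sigma>2_def Fam_def c_def KS_def by (rule double_count[OF iK(2) KN])
  have dc2: "real (card \<Sigma>2) * real CC = real c * real (card KS)"
  proof -
    have "(\<Sum>s2\<in>\<Sigma>2. \<Sum>S1\<in>Fam s2. (\<lambda>_. 1::real) (S1 \<union> s2)) = real c * (\<Sum>S\<in>KS. (\<lambda>_. 1::real) S)"
      unfolding \<Sigma>2_def Fam_def c_def KS_def by (rule double_count[OF iK(2) KN])
    moreover have "(\<Sum>s2\<in>\<Sigma>2. \<Sum>S1\<in>Fam s2. (\<lambda>_. 1::real) (S1 \<union> s2)) = (\<Sum>s2\<in>\<Sigma>2. real CC)"
      using cardFam by (intro sum.cong refl) simp
    ultimately show ?thesis by simp
  qed
  have epv: "(\<Sum>S\<in>KS. \<phi> S) \<le> real (card KS) * \<delta>"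
  proof -
    have "error_prob N K T q W dec = (\<Sum>S\<in>KS. \<phi> S) / real (card KS)"
      unfolding error_prob_def \<phi>_def KS_def ..
    then show ?thesis using ep KSpos unfolding \<delta>_def by (simp add: divide_le_eq mult.commute)
  qed
  have c0: "0 \<le> real c" by simp
  obtain s2 where s2: "s2 \<in> \<Sigma>2" and good: "(\<Sum>S1\<in>Fam s2. \<phi> (S1 \<union> s2)) \<le> real CC * \<delta>"
  proof (rule ccontr)
    assume "\<not> thesis"
    then have bad: "\<forall>s2\<in>\<Sigma>2. real CC * \<delta> < (\<Sum>S1\<in>Fam s2. \<phi> (S1 \<union> s2))" using that by force
    have "(\<Sum>s2\<in>\<Sigma>2. real CC * \<delta>) < (\<Sum>s2\<in>\<Sigma>2. \<Sum>S1\<in>Fam s2. \<phi> (S1 \<union> s2))"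
      using bad fin2 ne2 by (intro sum_strict_mono) auto
    also have "\<dots> = real c * (\<Sum>S\<in>KS. \<phi> S)" by (rule dc1)
    also have "\<dots> \<le> real c * (real (card KS) * \<delta>)" using epv c0 by (intro mult_left_mono)
    also have "\<dots> = (\<Sum>s2\<in>\<Sigma>2. real CC * \<delta>)" using dc2 by (simp add: mult.assoc[symmetric])
    finally show False by simp
  qed
  have s2': "s2 \<subseteq> {0..<N}" "card s2 = K - i" using s2 unfolding \<Sigma>2_def by auto
  have "(1 - \<epsilon>) * log 2 (real (card {S1. S1 \<subseteq> {0..<N} - s2 \<and> card S1 = i})) \<le> real T * M"
  proof (rule fano_family[OF eps vc q KN iK s2'])
    show "(\<Sum>S1\<in>{S1. S1 \<subseteq> {0..<N} - s2 \<and> card S1 = i}.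
            \<Sum>X\<in>designs N T. \<Sum>Y\<in>outcomes T. design_prob q N T X * chan_prob K W (S1 \<union> s2) X T Y *
               (if dec X Y = S1 \<union> s2 then 0 else 1))
         \<le> real (card {S1. S1 \<subseteq> {0..<N} - s2 \<and> card S1 = i}) * (min \<epsilon> 1 / 9)^2"
      using good cardFam[OF s2] unfolding \<phi>_def Fam_def \<delta>_def by simp
    show "\<forall>S1\<in>{S1. S1 \<subseteq> {0..<N} - s2 \<and> card S1 = i}. single_letter_mi K q W (positions K (S1 \<union> s2) S1) = M"
      using MI[OF s2] unfolding Fam_def by blast
  qed
  moreover have "card {S1. S1 \<subseteq> {0..<N} - s2 \<and> card S1 = i} = (N - K + i) choose i"
    using cardFam[OF s2] unfolding Fam_def CC_def .
  ultimately show ?thesis unfolding M_def by simp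
qed

theorem theorem3:
  fixes \<epsilon> :: real
  assumes "\<epsilon> > 0"
  shows "\<exists>\<delta>>0. \<forall>N K T q W dec.
     K \<le> N \<and> 0 \<le> q \<and> q \<le> 1 \<and> valid_channel K W \<and> error_prob N K T q W dec \<le> \<delta> \<longrightarrow>
     (\<forall>S\<in>ksubsets N K. \<forall>i\<in>{1..K}. \<forall>(S1, S2)\<in>Xi S K i.
        (1 - \<epsilon>) * log 2 (real ((N - K + i) choose i))
          \<le> real T * single_letter_mi K q W (positions K S S1))"
proof (intro exI[of _ "(min \<epsilon> 1 / 9)^2"] conjI allI impI ballI)
  show "0 < (min \<epsilon> 1 / 9)^2" using assms by simp
next
  fix N K T q W dec S i x
  assume H: "K \<le> N \<and> 0 \<le> q \<and> q \<le> 1 \<and> valid_channel K W \<and> error_prob N K T q W dec \<le> (min \<epsilon> 1 / 9)^2"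
    and S: "S \<in> ksubsets N K" and i: "i \<in> {1..K}" and x: "x \<in> Xi S K i"
  obtain S1 S2 where x12: "x = (S1, S2)" by fastforce
  have "(1 - \<epsilon>) * log 2 (real ((N - K + i) choose i)) \<le> real T * single_letter_mi K q W (positions K S S1)"
    using theorem3_core[OF assms _ _ _ _ _ S i] H x x12 by blast
  then show "case x of (S1, S2) \<Rightarrow> (1 - \<epsilon>) * log 2 (real ((N - K + i) choose i))
          \<le> real T * single_letter_mi K q W (positions K S S1)" unfolding x12 by simp
qed


end
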